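(* Let $n\in\mathbb{Z}$ with $|n|\geq1$, $\alpha>0$, $R>0$ and $-\frac{r_0^2+n^2}{2R^2}<\kappa<\alpha^{-1}-\frac{r_0^2+n^2}{2R^2}$. Then there exists a constant $C_2>0$ such that $\langle\gamma_\kappa'(u),u\rangle<-C_2<0$ for all $u\in\mathcal{M}$.
   Context: $r_0\approx2.404825$ is the first positive zero of the Bessel function $J_0$. $H$ is the completion of $\{u\in C^1[0,R]: u(0)=0=u(R)\}$ with respect to the inner product $(u,\tilde u)=\int_0^R\{ru_r\tilde u_r+\frac1r u\tilde u\}dr$. $\gamma_\kappa(u)=\frac12\int_0^R\{ru_r^2+\frac{n^2}{r}u^2-2(\alpha^{-1}-\kappa)ru^2+2\alpha^{-1}\frac{ru^2}{1+\alpha u^2}\}dr$, $\gamma_\kappa'$ is its Fréchet derivative, $\langle\cdot,\cdot\rangle$ the duality between $H^{-1}$ and $H$, and $\mathcal{M}=\{u\in H\setminus\{0\}:\gamma_\kappa(u)=0\}$. *)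

theory Defs
  imports "HOL-Analysis.Analysis"
begin

definition J0 :: "real \<Rightarrow> real" where
  "J0 x = (\<Sum>k. (-1) ^ k / (fact k) ^ 2 * (x / 2) ^ (2 * k))"

definition r0 :: real where
  "r0 = (LEAST x. x > 0 \<and> J0 x = 0)"

definition C1_0 :: "real \<Rightarrow> (real \<Rightarrow> real) \<Rightarrow> (real \<Rightarrow> real) \<Rightarrow> bool" where
  "C1_0 R \<phi> \<phi>' \<longleftrightarrow> continuous_on {0..R} \<phi>' \<and>
     (\<forall>x\<in>{0..R}. (\<phi> has_real_derivative \<phi>' x) (at x within {0..R})) \<and>
     \<phi> 0 = 0 \<and> \<phi> R = 0"

definition Hnorm2 :: "real \<Rightarrow> (real \<Rightarrow> real) \<Rightarrow> (real \<Rightarrow> real) \<Rightarrow> real" where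
  "Hnorm2 R u u' = (LINT r:{0..R}|lborel. r * (u' r)^2 + (u r)^2 / r)"

text \<open>The space H, represented by pairs (u, u_r): limits in the H-norm of C^1 functions
  vanishing at 0 and R (together with the limit of their derivatives).\<close>
definition Hspace :: "real \<Rightarrow> ((real \<Rightarrow> real) \<times> (real \<Rightarrow> real)) set" where
  "Hspace R = {(u, u'). u \<in> borel_measurable borel \<and> u' \<in> borel_measurable borel \<and>
      set_integrable lborel {0..R} (\<lambda>r. r * (u' r)^2 + (u r)^2 / r) \<and>
      (\<exists>\<phi> \<phi>'. (\<forall>k. C1_0 R (\<phi> k) (\<phi>' k)) \<and>
         (\<lambda>k. Hnorm2 R (\<lambda>r. \<phi> k r - u r) (\<lambda>r. \<phi>' k r - u' r)) \<longlonglongrightarrow> 0)}"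

definition gamma :: "real \<Rightarrow> int \<Rightarrow> real \<Rightarrow> real \<Rightarrow> (real \<Rightarrow> real) \<times> (real \<Rightarrow> real) \<Rightarrow> real" where
  "gamma R n \<alpha> \<kappa> p = (case p of (u, u') \<Rightarrow>
     1/2 * (LINT r:{0..R}|lborel. r * (u' r)^2 + (real_of_int n)^2 / r * (u r)^2
        - 2 * (1/\<alpha> - \<kappa>) * r * (u r)^2 + 2 * (1/\<alpha>) * (r * (u r)^2 / (1 + \<alpha> * (u r)^2))))"

definition Mset :: "real \<Rightarrow> int \<Rightarrow> real \<Rightarrow> real \<Rightarrow> ((real \<Rightarrow> real) \<times> (real \<Rightarrow> real)) set" where
  "Mset R n \<alpha> \<kappa> = {p \<in> Hspace R. Hnorm2 R (fst p) (snd p) \<noteq> 0 \<and> gamma R n \<alpha> \<kappa> p = 0}"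

definition Hscale :: "real \<Rightarrow> (real \<Rightarrow> real) \<times> (real \<Rightarrow> real) \<Rightarrow> (real \<Rightarrow> real) \<times> (real \<Rightarrow> real)" where
  "Hscale c p = ((\<lambda>r. c * fst p r), (\<lambda>r. c * snd p r))"

end

theory Submission
  imports Defs
begin
definition aJ :: "nat \<Rightarrow> real" where "aJ k = (-1)^k / ((fact k)^2 * 4^k)"
definition bJ :: "nat \<Rightarrow> real" where "bJ k = real k * aJ k"
definition fJ :: "real \<Rightarrow> real" where "fJ y = (\<Sum>k. aJ k * y^k)"
definition fJ' :: "real \<Rightarrow> real" where "fJ' y = (\<Sum>k. diffs aJ k * y^k)"
definition hJ :: "real \<Rightarrow> real" where "hJ y = (\<Sum>k. bJ k * y^k)"

lemma summable_fact_bound: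
  fixes c :: "nat \<Rightarrow> real"
  assumes "\<And>k. \<bar>c k\<bar> \<le> 1 / fact k"
  shows "summable (\<lambda>k. c k * y^k)"
proof (rule summable_comparison_test')
  show "summable (\<lambda>k. inverse (fact k) * \<bar>y\<bar>^k)" by (rule summable_exp)
  fix k :: nat
  have "norm (c k * y^k) = \<bar>c k\<bar> * \<bar>y\<bar>^k" by (simp add: abs_mult power_abs)
  also have "\<dots> \<le> inverse (fact k) * \<bar>y\<bar>^k"
    using assms[of k] by (intro mult_right_mono) (auto simp: divide_inverse)
  finally show "norm (c k * y^k) \<le> inverse (fact k) * \<bar>y\<bar>^k" .
qed

lemma fact_sq_ge: "(fact k :: real) \<le> (fact k)^2 * 4^k"
proof -
  have "(1::real) \<le> fact k" by simp
  then have "fact k * 1 \<le> (fact k :: real) * fact k" by (intro mult_left_mono) auto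
  also have "\<dots> \<le> (fact k)^2 * 4^k" by (simp add: power2_eq_square)
  finally show ?thesis by simp
qed

lemma aJ_bound: "\<bar>aJ k\<bar> \<le> 1 / fact k"
proof -
  have "\<bar>aJ k\<bar> = 1 / ((fact k)^2 * 4^k)" by (simp add: aJ_def abs_mult power_abs)
  also have "\<dots> \<le> 1 / fact k"
    using fact_sq_ge[of k] by (intro divide_left_mono) auto
  finally show ?thesis .
qed

lemma bJ_bound: "\<bar>bJ k\<bar> \<le> 1 / fact k"
proof (cases k)
  case 0 then show ?thesis by (simp add: bJ_def)
next
  case (Suc m)
  have "\<bar>bJ k\<bar> = real k / ((fact k)^2 * 4^k)" by (simp add: bJ_def aJ_def abs_mult power_abs)
  also have "\<dots> \<le> real k / (fact k * real k)"
  proof (intro divide_left_mono)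
    have "fact k = real k * fact m" using Suc by simp
    have "real k \<le> fact k" by (metis fact_ge_self of_nat_fact of_nat_le_iff)
    then have "fact k * real k \<le> fact k * fact k" by (intro mult_left_mono) auto
    also have "\<dots> \<le> (fact k)^2 * 4^k" by (simp add: power2_eq_square)
    finally show "fact k * real k \<le> (fact k)^2 * 4^k" .
  qed (use Suc in auto)
  also have "\<dots> = 1 / fact k" using Suc by simp
  finally show ?thesis .
qed

lemma summable_aJ: "summable (\<lambda>k. aJ k * y^k)" by (rule summable_fact_bound[OF aJ_bound])
lemma summable_bJ: "summable (\<lambda>k. bJ k * y^k)" by (rule summable_fact_bound[OF bJ_bound])

lemma fJ_deriv: "(fJ has_real_derivative fJ' y) (at y)"
  unfolding fJ_def fJ'_def by (rule termdiffs_strong_converges_everywhere[OF summable_aJ])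

lemma aJ_Suc: "4 * ((real n + 1) * (real n + 1) * aJ (Suc n)) = - aJ n"
proof -
  define m where "m = real (Suc n)"
  have m: "m > 0" "real n + 1 = m" unfolding m_def by auto
  have "aJ (Suc n) = - ((-1)^n / ((m * m) * ((fact n)^2 * 4^n) * 4))"
    unfolding aJ_def m_def by (simp add: fact_Suc power2_eq_square mult_ac del: of_nat_Suc)
  then show ?thesis unfolding m(2) using m(1) by (simp add: aJ_def field_simps)
qed

lemma diffs_bJ: "diffs bJ n = - aJ n / 4"
proof -
  have nz: "real n + 1 \<noteq> 0" by linarith
  have "diffs bJ n = (real n + 1) * (real n + 1) * aJ (Suc n)"
    unfolding diffs_def bJ_def by (simp add: field_simps)
  also have "\<dots> = - aJ n / 4" using aJ_Suc[of n] by linarith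
  finally show ?thesis .
qed

lemma hJ_deriv: "(hJ has_real_derivative (- fJ y / 4)) (at y)"
proof -
  have "(hJ has_real_derivative (\<Sum>k. diffs bJ k * y^k)) (at y)"
    unfolding hJ_def by (rule termdiffs_strong_converges_everywhere[OF summable_bJ])
  moreover have "(\<Sum>k. diffs bJ k * y^k) = - fJ y / 4"
  proof -
    have "(\<Sum>k. diffs bJ k * y^k) = (\<Sum>k. - (aJ k * y^k) / 4)"
      unfolding diffs_bJ by simp
    also have "\<dots> = - (\<Sum>k. aJ k * y^k / 4)"
      by (subst suminf_minus[OF summable_divide[OF summable_aJ], symmetric]) simp
    also have "\<dots> = - (\<Sum>k. aJ k * y^k) / 4"
      using suminf_divide[OF summable_aJ[of y], of 4] by simp
    finally show ?thesis unfolding fJ_def .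
  qed
  ultimately show ?thesis by simp
qed

lemma hJ_eq: "hJ y = y * fJ' y"
proof -
  have "(\<Sum>n. bJ (Suc n) * y^(Suc n)) = hJ y - bJ 0 * y^0"
    unfolding hJ_def by (rule suminf_split_head[OF summable_bJ])
  moreover have "(\<lambda>n. bJ (Suc n) * y^(Suc n)) = (\<lambda>n. y * (diffs aJ n * y^n))"
    by (auto simp: bJ_def diffs_def)
  moreover have "summable (\<lambda>n. diffs aJ n * y^n)"
    by (rule termdiff_converges_all) (rule summable_aJ)
  ultimately show ?thesis
    using suminf_mult[of "\<lambda>n. diffs aJ n * y^n" y] by (simp add: bJ_def fJ'_def)
qed

lemma J0_fJ: "J0 x = fJ (x^2)"
proof -
  have e: "(2::real)^k * 2^k = 4^k" for k :: nat by (simp add: power_mult_distrib[symmetric])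
  show ?thesis
  unfolding J0_def fJ_def aJ_def
  by (simp add: power_mult power_divide power2_eq_square field_simps e)
qed

lemma fJ_cont: "isCont fJ y" using fJ_deriv DERIV_isCont by blast

lemma J0_cont: "isCont J0 x"
  unfolding J0_fJ[abs_def] by (intro continuous_intros isCont_o2[OF _ fJ_cont])

definition tJ :: "real \<Rightarrow> nat \<Rightarrow> real" where "tJ y k = y^k / (fact k)^2"

lemma J0_tJ: "J0 x = (\<Sum>k. (-1)^k * tJ (x^2/4) k)"
proof -
  have e: "(2::real)^k * 2^k = 4^k" for k :: nat by (simp add: power_mult_distrib[symmetric])
  show ?thesis unfolding J0_def tJ_def
    by (simp add: power_mult power_divide power2_eq_square field_simps e)
qed

lemma tJ_Suc: "tJ y (Suc k) = tJ y k * (y / (real (Suc k))^2)"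
  unfolding tJ_def by (simp add: fact_Suc power2_eq_square field_simps del: of_nat_Suc)

lemma tJ_nonneg: "y \<ge> 0 \<Longrightarrow> tJ y k \<ge> 0" unfolding tJ_def by simp

lemma tJ_summable: "summable (tJ y)"
proof -
  have "summable (\<lambda>k. (1 / (fact k)^2) * y^k)"
  proof (rule summable_fact_bound)
    fix k :: nat
    have f1: "(1::real) \<le> fact k" by simp
    have "(fact k :: real) * 1 \<le> fact k * fact k" by (rule mult_left_mono[OF f1]) simp
    then have "(fact k :: real) \<le> (fact k)^2" by (simp add: power2_eq_square)
    then show "\<bar>1 / (fact k)^2\<bar> \<le> 1 / (fact k :: real)"
      by (simp add: divide_left_mono)
  qed
  then show ?thesis unfolding tJ_def by (simp add: field_simps)
qed

lemma tJ_zero: "tJ y \<longlonglongrightarrow> 0" by (rule summable_LIMSEQ_zero[OF tJ_summable])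

lemma tJ_mono:
  assumes "0 \<le> y" "y \<le> real (Suc k)^2"
  shows "tJ y (Suc k) \<le> tJ y k"
proof -
  have "y / (real (Suc k))^2 \<le> 1" using assms by (simp add: divide_le_eq_1)
  then have "tJ y k * (y / (real (Suc k))^2) \<le> tJ y k * 1"
    using tJ_nonneg[OF assms(1)] by (intro mult_left_mono) auto
  then show ?thesis unfolding tJ_Suc by simp
qed

lemma J0_pos_small:
  assumes "0 \<le> x" "x < 2"
  shows "J0 x > 0"
proof -
  let ?y = "x^2/4"
  have y0: "0 \<le> ?y" by simp
  have y1: "?y < 1"
  proof -
    have "x^2 < 2^2" using assms by (intro power_strict_mono) auto
    then show ?thesis by simp
  qed
  have mono: "tJ ?y (Suc n) \<le> tJ ?y n" for n
  proof (rule tJ_mono[OF y0])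
    have "(1::real) \<le> real (Suc n)^2" by simp
    then show "?y \<le> real (Suc n)^2" using y1 by linarith
  qed
  have "(\<Sum>i<2*1. (-1)^i * tJ ?y i) \<le> (\<Sum>i. (-1)^i * tJ ?y i)"
    by (rule summable_Leibniz'(2)[OF tJ_zero tJ_nonneg[OF y0] mono])
  moreover have "(\<Sum>i<2*1. (-1)^i * tJ ?y i) = 1 - ?y"
    by (simp add: tJ_def numeral_2_eq_2)
  ultimately show ?thesis unfolding J0_tJ using y1 by linarith
qed

lemma J0_3_neg: "J0 3 < 0"
proof -
  let ?y = "9/4 :: real"
  define s where "s k = tJ ?y (Suc k)" for k
  have s0: "0 \<le> s n" for n unfolding s_def by (rule tJ_nonneg) simp
  have sz: "s \<longlonglongrightarrow> 0" unfolding s_def by (rule LIMSEQ_Suc[OF tJ_zero])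
  have smono: "s (Suc n) \<le> s n" for n
    unfolding s_def
  proof (rule tJ_mono)
    have "(4::real) \<le> real (Suc (Suc n))^2"
    proof -
      have "(2::real) \<le> real (Suc (Suc n))" by simp
      then have "2^2 \<le> real (Suc (Suc n))^2" by (intro power_mono) auto
      then show ?thesis by simp
    qed
    then show "?y \<le> real (Suc (Suc n))^2" by simp
  qed simp
  have sum1: "summable (\<lambda>k. (-1)^k * tJ ?y k)"
    by (rule summable_comparison_test'[OF tJ_summable[of ?y], of 0]) (simp add: abs_mult tJ_def)
  have "(\<Sum>i<2*2. (-1)^i * s i) \<le> (\<Sum>i. (-1)^i * s i)"
    by (rule summable_Leibniz'(2)[OF sz s0 smono])
  moreover have "(\<Sum>i<2*2. (-1)^i * s i) > 1"
    by (simp add: s_def tJ_def numeral_eq_Suc fact_Suc)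
  moreover have "(\<Sum>k. (-1)^(Suc k) * tJ ?y (Suc k)) = (\<Sum>k. (-1)^k * tJ ?y k) - (-1)^0 * tJ ?y 0"
    by (rule suminf_split_head[OF sum1])
  moreover have "(\<lambda>k. (-1)^(Suc k) * tJ ?y (Suc k)) = (\<lambda>k. - ((-1)^k * s k))"
    by (auto simp: s_def)
  moreover have "(\<Sum>k. - ((-1)^k * s k)) = - (\<Sum>k. (-1)^k * s k)"
    by (rule suminf_minus[OF summable_Leibniz'(1)[OF sz s0 smono]])
  ultimately have "(\<Sum>k. (-1)^k * tJ ?y k) < 0"
    by (simp add: tJ_def)
  moreover have "(3::real)^2/4 = ?y" by simp
  ultimately show ?thesis unfolding J0_tJ by simp
qed

lemma J0_cont_on: "continuous_on A J0"
  by (intro continuous_at_imp_continuous_on ballI J0_cont)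

lemma r0_props: "r0 \<ge> 2" "J0 r0 = 0" "\<And>x. 0 \<le> x \<Longrightarrow> x < r0 \<Longrightarrow> J0 x > 0"
proof -
  define S where "S = {x. 2 \<le> x \<and> J0 x = 0}"
  have "\<exists>z. 1 \<le> z \<and> z \<le> 3 \<and> J0 z = 0"
  proof (rule IVT2[of J0 3 0 1])
    show "J0 3 \<le> 0" using J0_3_neg by linarith
    have "J0 1 > 0" by (rule J0_pos_small) auto
    then show "0 \<le> J0 1" by linarith
    show "(1::real) \<le> 3" by simp
    show "\<forall>x. 1 \<le> x \<and> x \<le> 3 \<longrightarrow> isCont J0 x" using J0_cont by blast
  qed
  then obtain z where z: "1 \<le> z" "z \<le> 3" "J0 z = 0" by blast
  have "z \<ge> 2"
  proof (rule ccontr)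
    assume "\<not> z \<ge> 2" then have "J0 z > 0" using z by (intro J0_pos_small) auto
    then show False using z by simp
  qed
  then have ne: "S \<noteq> {}" using z unfolding S_def by auto
  have bdd: "bdd_below S" unfolding S_def by (rule bdd_belowI[of _ 2]) auto
  have cl: "closed S" unfolding S_def
    by (intro closed_Collect_conj closed_Collect_le closed_Collect_eq continuous_on_const continuous_on_id J0_cont_on)
  have inS: "Inf S \<in> S" by (rule closed_contains_Inf[OF ne bdd cl])
  have least: "Inf S \<le> y" if "y > 0" "J0 y = 0" for y
  proof (cases "y < 2")
    case True then have "J0 y > 0" using that by (intro J0_pos_small) auto
    then show ?thesis using that by simp
  next
    case False then have "y \<in> S" using that unfolding S_def by auto
    then show ?thesis by (rule cInf_lower[OF _ bdd])
  qed
  have r0eq: "r0 = Inf S" unfolding r0_def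
    by (rule Least_equality) (use inS least in \<open>auto simp: S_def\<close>)
  show "r0 \<ge> 2" "J0 r0 = 0" using inS unfolding r0eq S_def by auto
  fix x assume x: "0 \<le> x" "x < r0"
  show "J0 x > 0"
  proof (rule ccontr)
    assume "\<not> J0 x > 0"
    have "\<exists>y. 0 \<le> y \<and> y \<le> x \<and> J0 y = 0"
      by (rule IVT2[of J0 x 0 0]) (use \<open>\<not> J0 x > 0\<close> x J0_cont J0_pos_small[of 0] in auto)
    then obtain y where y: "0 \<le> y" "y \<le> x" "J0 y = 0" by blast
    have "y > 0" using y J0_pos_small[of 0] by (cases "y = 0") auto
    then have "Inf S \<le> y" using least y by auto
    then show False using x y r0eq by simp
  qed
qed

lemma fJ'_deriv: "(fJ' has_real_derivative (\<Sum>k. diffs (diffs aJ) k * y^k)) (at y)"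
  unfolding fJ'_def
  by (rule termdiffs_strong_converges_everywhere) (rule termdiff_converges_all, rule summable_aJ)

lemma fJ'_cont: "isCont fJ' y" using fJ'_deriv DERIV_isCont by blast

lemma fJ_cont_on [continuous_intros]: "continuous_on s g \<Longrightarrow> continuous_on s (\<lambda>x. fJ (g x))"
  by (rule continuous_on_compose2[of UNIV fJ s g]) (auto intro: continuous_at_imp_continuous_on fJ_cont)

lemma fJ'_cont_on [continuous_intros]: "continuous_on s g \<Longrightarrow> continuous_on s (\<lambda>x. fJ' (g x))"
  by (rule continuous_on_compose2[of UNIV fJ' s g]) (auto intro: continuous_at_imp_continuous_on fJ'_cont)

lemma fJ_chain [derivative_intros]:
  "(g has_real_derivative g') (at x within s) \<Longrightarrow> ((\<lambda>x. fJ (g x)) has_real_derivative fJ' (g x) * g') (at x within s)"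
  by (rule DERIV_chain2[OF fJ_deriv])

lemma hJ_chain [derivative_intros]:
  "(g has_real_derivative g') (at x within s) \<Longrightarrow> ((\<lambda>x. hJ (g x)) has_real_derivative (- fJ (g x) / 4) * g') (at x within s)"
  by (rule DERIV_chain2[OF hJ_deriv])

lemma hJ_0: "hJ 0 = 0" using hJ_eq[of 0] by simp

lemma C1_0_D:
  assumes "C1_0 R \<phi> \<phi>'"
  shows "continuous_on {0..R} \<phi>'" "\<And>x. x \<in> {0..R} \<Longrightarrow> (\<phi> has_real_derivative \<phi>' x) (at x within {0..R})"
    "\<phi> 0 = 0" "\<phi> R = 0" "continuous_on {0..R} \<phi>"
  using assms unfolding C1_0_def by (auto intro: DERIV_continuous_on)

lemma poincare_C1:
  fixes \<phi> \<phi>' :: "real \<Rightarrow> real"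
  assumes C: "C1_0 R \<phi> \<phi>'" and R: "R > 0" and \<rho>: "0 < \<rho>" "\<rho> < r0"
  shows "(\<rho>/R)^2 * (LINT r:{0..R}|lborel. r * (\<phi> r)^2) \<le> (LINT r:{0..R}|lborel. r * (\<phi>' r)^2)"
proof -
  note CD = C1_0_D[OF C]
  define k where "k = (\<rho>/R)^2"
  have k: "k > 0" unfolding k_def using R \<rho> by simp
  define w where "w r = fJ (k * r^2)" for r
  define w' where "w' r = fJ' (k * r^2) * (2 * k * r)" for r
  have wpos: "w r > 0" if "r \<in> {0..R}" for r
  proof -
    have "w r = J0 (\<rho>/R * r)" unfolding w_def J0_fJ k_def by (simp add: power_mult_distrib power_divide)
    moreover have "\<rho>/R * r < r0"
    proof -
      have "\<rho>/R * r \<le> \<rho>/R * R" using that R \<rho> by (intro mult_left_mono) auto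
      then show ?thesis using R \<rho> by simp
    qed
    moreover have "0 \<le> \<rho>/R * r" using that R \<rho> by simp
    ultimately show ?thesis using r0_props(3) by simp
  qed
  have wd: "(w has_real_derivative w' x) (at x within s)" for x s
    unfolding w_def w'_def by (auto intro!: derivative_eq_intros)
  have hw: "2 * hJ (k * r^2) = r * w' r" for r
    unfolding w'_def hJ_eq by (simp add: power2_eq_square)
  define F where "F r = 2 * hJ (k * r^2) * (\<phi> r)^2 / w r" for r
  define q where "q r = w' r / w r" for r
  define G where "G r = - k * r * (\<phi> r)^2 + 2 * r * q r * \<phi> r * \<phi>' r - r * (q r)^2 * (\<phi> r)^2" for r
  have Fd: "(F has_vector_derivative G x) (at x within {0..R})" if x: "0 \<le> x" "x \<le> R" for x
  proof -
    have xin: "x \<in> {0..R}" using x by simp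
    have wx: "w x \<noteq> 0" using wpos[OF xin] by simp
    have "(F has_real_derivative
       ((2 * ((- fJ (k * x^2) / 4) * (k * (2 * x))) * (\<phi> x)^2 + 2 * hJ (k * x^2) * (2 * \<phi> x * \<phi>' x)) * w x
        - 2 * hJ (k * x^2) * (\<phi> x)^2 * w' x) / (w x * w x)) (at x within {0..R})"
      unfolding F_def
      by (rule derivative_eq_intros refl wd CD(2)[OF xin] | simp add: wx)+
    moreover have "((2 * ((- fJ (k * x^2) / 4) * (k * (2 * x))) * (\<phi> x)^2 + 2 * hJ (k * x^2) * (2 * \<phi> x * \<phi>' x)) * w x
        - 2 * hJ (k * x^2) * (\<phi> x)^2 * w' x) / (w x * w x) = G x"
      unfolding G_def q_def using hw[of x] wx
      by (simp add: w_def field_simps power2_eq_square)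
    ultimately show ?thesis by (simp add: has_real_derivative_iff_has_vector_derivative)
  qed
  have cw: "continuous_on {0..R} w" unfolding w_def by (intro continuous_intros)
  have cw': "continuous_on {0..R} w'" unfolding w'_def by (intro continuous_intros)
  have cq: "continuous_on {0..R} q" unfolding q_def
    by (rule continuous_on_divide[OF cw' cw]) (use wpos in force)
  have cG: "continuous_on {0..R} G" unfolding G_def
    by (intro continuous_intros cq CD(1) CD(5))
  have intG: "(LINT r:{0..R}|lborel. G r) = F R - F 0"
    unfolding set_lebesgue_integral_def
    by (rule integral_FTC_atLeastAtMost[OF _ Fd cG]) (use R in auto)
  have F0: "F R = 0" "F 0 = 0" unfolding F_def using CD(3,4) by auto
  define S where "S r = r * (\<phi>' r - q r * \<phi> r)^2" for r
  have cS: "continuous_on {0..R} S" unfolding S_def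
    by (intro continuous_intros cq CD(1) CD(5))
  have ident: "r * (\<phi>' r)^2 - k * (r * (\<phi> r)^2) = G r + S r" for r
    unfolding G_def S_def by (simp add: power2_eq_square algebra_simps)
  have i1: "set_integrable lborel {0..R} (\<lambda>r. r * (\<phi>' r)^2)"
    by (intro borel_integrable_atLeastAtMost' continuous_intros CD(1))
  have i2: "set_integrable lborel {0..R} (\<lambda>r. r * (\<phi> r)^2)"
    by (intro borel_integrable_atLeastAtMost' continuous_intros CD(5))
  have iG: "set_integrable lborel {0..R} G" by (rule borel_integrable_atLeastAtMost'[OF cG])
  have iS: "set_integrable lborel {0..R} S" by (rule borel_integrable_atLeastAtMost'[OF cS])
  have Snn: "(LINT r:{0..R}|lborel. S r) \<ge> 0"
    unfolding set_lebesgue_integral_def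
    by (rule Bochner_Integration.integral_nonneg) (auto simp: S_def indicator_def)
  have "(LINT r:{0..R}|lborel. r * (\<phi>' r)^2) - k * (LINT r:{0..R}|lborel. r * (\<phi> r)^2)
      = (LINT r:{0..R}|lborel. r * (\<phi>' r)^2 - k * (r * (\<phi> r)^2))"
    using i1 i2 by (simp add: set_integral_diff set_integrable_mult_right)
  also have "\<dots> = (LINT r:{0..R}|lborel. G r + S r)" unfolding ident ..
  also have "\<dots> = (LINT r:{0..R}|lborel. G r) + (LINT r:{0..R}|lborel. S r)"
    by (rule set_integral_add(2)[OF iG iS])
  finally show ?thesis using intG F0 Snn unfolding k_def by linarith
qed

lemma C1_lin_bound:
  assumes C: "C1_0 R \<phi> \<phi>'"
  shows "\<exists>M\<ge>0. \<forall>x\<in>{0..R}. \<bar>\<phi> x\<bar> \<le> M * x"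
proof -
  note CD = C1_0_D[OF C]
  have "compact (\<phi>' ` {0..R})" by (rule compact_continuous_image[OF CD(1) compact_Icc])
  then obtain B where B: "\<forall>y\<in>\<phi>' ` {0..R}. norm y \<le> B" using compact_imp_bounded bounded_iff by metis
  define M where "M = max B 0"
  have "\<bar>\<phi> x\<bar> \<le> M * x" if x: "x \<in> {0..R}" for x
  proof (cases "R \<ge> 0")
    case True
    have "norm (\<phi> x - \<phi> 0) \<le> M * norm (x - 0)"
      by (rule field_differentiable_bound[of "{0..R}" \<phi> \<phi>']) (use CD(2) B x True in \<open>auto simp: M_def le_max_iff_disj\<close>)
    then show ?thesis using CD(3) x by simp
  next
    case False then show ?thesis using x by simp
  qed
  then show ?thesis unfolding M_def by (intro exI[of _ "max B 0"]) auto
qed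

lemma set_meas_C0:
  assumes "continuous_on {0..R} (\<phi>::real \<Rightarrow> real)"
  shows "(\<lambda>x. indicator {0..R} x * \<phi> x) \<in> borel_measurable lborel"
  using set_measurable_continuous_on[OF _ assms] unfolding set_borel_measurable_def by simp

lemma C1_integrable:
  assumes C: "C1_0 R \<phi> \<phi>'"
  shows "set_integrable lborel {0..R} (\<lambda>r. (\<phi> r)^2 / r)"
    "set_integrable lborel {0..R} (\<lambda>r. r * (\<phi>' r)^2)"
    "set_integrable lborel {0..R} (\<lambda>r. r * (\<phi>' r)^2 + (\<phi> r)^2 / r)"
proof -
  note CD = C1_0_D[OF C]
  obtain M where M: "M \<ge> 0" "\<forall>x\<in>{0..R}. \<bar>\<phi> x\<bar> \<le> M * x" using C1_lin_bound[OF C] by blast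
  have ic: "set_integrable lborel {0..R} (\<lambda>r. M^2 * R)"
    by (rule borel_integrable_atLeastAtMost') (rule continuous_on_const)
  have meas: "set_borel_measurable lborel {0..R} (\<lambda>r. (\<phi> r)^2 / r)"
  proof -
    have "(\<lambda>x. (indicator {0..R} x * \<phi> x)^2 / x) \<in> borel_measurable lborel"
      using set_meas_C0[OF CD(5)] by measurable
    moreover have "(\<lambda>x. (indicator {0..R} x * \<phi> x)^2 / x) = (\<lambda>x. indicator {0..R} x *\<^sub>R ((\<phi> x)^2 / x))"
      by (auto simp: indicator_def)
    ultimately show ?thesis unfolding set_borel_measurable_def by simp
  qed
  show i1: "set_integrable lborel {0..R} (\<lambda>r. (\<phi> r)^2 / r)"
  proof (rule set_integrable_bound[OF ic meas], rule AE_I2, rule impI)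
    fix x assume x: "x \<in> {0..R}"
    have "\<bar>\<phi> x\<bar>^2 \<le> (M * x)^2" using M x by (intro power_mono) auto
    then have "(\<phi> x)^2 \<le> M^2 * x * x" by (simp add: power2_eq_square mult_ac)
    then have "(\<phi> x)^2 / x \<le> M^2 * x" using x
      by (cases "x = 0") (auto simp: divide_le_eq)
    also have "\<dots> \<le> M^2 * R" using x by (intro mult_left_mono) auto
    finally show "norm ((\<phi> x)^2 / x) \<le> norm (M^2 * R)" using x by simp
  qed
  show i2: "set_integrable lborel {0..R} (\<lambda>r. r * (\<phi>' r)^2)"
    by (intro borel_integrable_atLeastAtMost' continuous_intros CD(1))
  show "set_integrable lborel {0..R} (\<lambda>r. r * (\<phi>' r)^2 + (\<phi> r)^2 / r)"
    by (rule set_integral_add(1)[OF i2 i1])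
qed

lemma C1_sup:
  assumes C: "C1_0 R \<phi> \<phi>'" and x: "x \<in> {0..R}"
  shows "(\<phi> x)^2 \<le> Hnorm2 R \<phi> \<phi>'"
proof -
  note CD = C1_0_D[OF C]
  define g where "g r = r * (\<phi>' r)^2 + (\<phi> r)^2 / r" for r
  have ig: "set_integrable lborel {0..R} g" unfolding g_def by (rule C1_integrable(3)[OF C])
  have sub: "{0..x} \<subseteq> {0..R}" using x by auto
  have ig2: "set_integrable lborel {0..x} g" by (rule set_integrable_subset[OF ig _ sub]) simp
  have cont: "continuous_on {0..x} (\<lambda>r. 2 * \<phi> r * \<phi>' r)"
    by (intro continuous_intros continuous_on_subset[OF CD(1) sub] continuous_on_subset[OF CD(5) sub])
  have i3: "set_integrable lborel {0..x} (\<lambda>r. 2 * \<phi> r * \<phi>' r)" by (rule borel_integrable_atLeastAtMost'[OF cont])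
  have "(LINT r:{0..x}|lborel. 2 * \<phi> r * \<phi>' r) = (\<phi> x)^2 - (\<phi> 0)^2"
    unfolding set_lebesgue_integral_def
  proof (rule integral_FTC_atLeastAtMost[OF _ _ cont])
    show "0 \<le> x" using x by simp
    fix y assume y: "0 \<le> y" "y \<le> x"
    then have yin: "y \<in> {0..R}" using x by auto
    have "((\<lambda>r. (\<phi> r)^2) has_real_derivative (2 * \<phi> y * \<phi>' y)) (at y within {0..x})"
      by (rule derivative_eq_intros has_field_derivative_subset[OF CD(2)[OF yin] sub] refl | simp)+
    then show "((\<lambda>r. (\<phi> r)^2) has_vector_derivative 2 * \<phi> y * \<phi>' y) (at y within {0..x})"
      by (simp add: has_real_derivative_iff_has_vector_derivative)
  qed
  then have "(\<phi> x)^2 = (LINT r:{0..x}|lborel. 2 * \<phi> r * \<phi>' r)" using CD(3) by simp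
  also have "\<dots> \<le> (LINT r:{0..x}|lborel. g r)"
  proof (rule set_integral_mono[OF i3 ig2])
    fix r assume r: "r \<in> {0..x}"
    show "2 * \<phi> r * \<phi>' r \<le> g r"
    proof (cases "r = 0")
      case True then show ?thesis using CD(3) by (simp add: g_def)
    next
      case False
      then have rp: "r > 0" using r by simp
      have "0 \<le> (\<phi> r - r * \<phi>' r)^2 / r" using rp by simp
      also have "(\<phi> r - r * \<phi>' r)^2 / r = g r - 2 * \<phi> r * \<phi>' r"
        unfolding g_def using rp by (simp add: field_simps power2_eq_square)
      finally show ?thesis by simp
    qed
  qed
  also have "\<dots> \<le> (LINT r:{0..R}|lborel. g r)"
    unfolding set_lebesgue_integral_def
  proof (rule integral_mono)
    show "integrable lborel (\<lambda>r. indicator {0..x} r *\<^sub>R g r)" using ig2 unfolding set_integrable_def .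
    show "integrable lborel (\<lambda>r. indicator {0..R} r *\<^sub>R g r)" using ig unfolding set_integrable_def .
    fix r show "indicator {0..x} r *\<^sub>R g r \<le> indicator {0..R} r *\<^sub>R g r"
      using sub by (auto simp: indicator_def g_def)
  qed
  finally show ?thesis unfolding Hnorm2_def g_def .
qed

definition restr :: "real \<Rightarrow> (real \<Rightarrow> real) \<Rightarrow> real \<Rightarrow> real" where
  "restr R f x = indicator {0..R} x * f x"

lemma restr_eq: "x \<in> {0..R} \<Longrightarrow> restr R f x = f x" by (simp add: restr_def)

lemma C1_restr:
  assumes C: "C1_0 R \<phi> \<phi>'" and R: "R > 0"
  shows "C1_0 R (restr R \<phi>) (restr R \<phi>')"
    "restr R \<phi> \<in> borel_measurable borel" "restr R \<phi>' \<in> borel_measurable borel"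
proof -
  note CD = C1_0_D[OF C]
  show "restr R \<phi> \<in> borel_measurable borel" "restr R \<phi>' \<in> borel_measurable borel"
    unfolding restr_def[abs_def] using set_meas_C0[OF CD(5)] set_meas_C0[OF CD(1)] by auto
  have "continuous_on {0..R} (restr R \<phi>')"
    using CD(1) by (rule continuous_on_cong[THEN iffD1, rotated 2]) (auto simp: restr_eq)
  moreover have "(restr R \<phi> has_real_derivative restr R \<phi>' x) (at x within {0..R})" if x: "x \<in> {0..R}" for x
    unfolding restr_eq[OF x]
    by (rule has_field_derivative_transform_within[OF CD(2)[OF x] zero_less_one x]) (simp add: restr_eq)
  ultimately show "C1_0 R (restr R \<phi>) (restr R \<phi>')"
    unfolding C1_0_def using CD(3,4) R by (auto simp: restr_eq)
qed

lemma sq_eps: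
  fixes a b e :: real
  assumes "e > 0"
  shows "a^2 \<le> (1 + e) * b^2 + (1 + 1/e) * (a - b)^2"
proof -
  have "0 \<le> (e * b - (a - b))^2 / e" using assms by simp
  also have "(e * b - (a - b))^2 / e = (1 + e) * b^2 + (1 + 1/e) * (a - b)^2 - a^2"
    using assms by (simp add: field_simps power2_eq_square)
  finally show ?thesis by simp
qed

lemma eps_limit:
  fixes a X :: real
  assumes X: "X \<ge> 0" and H: "\<And>e. e > 0 \<Longrightarrow> e \<le> 1 \<Longrightarrow> a \<le> (1 + e)^2 * X"
  shows "a \<le> X"
proof (rule field_le_epsilon)
  fix t :: real assume t: "t > 0"
  define e where "e = min 1 (t / (3 * X + 1))"
  have e: "e > 0" "e \<le> 1" "e \<le> t / (3 * X + 1)" unfolding e_def using t X by auto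
  have "a \<le> (1 + e)^2 * X" by (rule H[OF e(1,2)])
  also have "\<dots> = X + e * (2 + e) * X" by (simp add: power2_eq_square algebra_simps)
  also have "\<dots> \<le> X + e * 3 * X" using e X by (intro add_left_mono mult_right_mono mult_left_mono) auto
  also have "e * 3 * X \<le> t"
  proof -
    have "e * (3 * X + 1) \<le> t" using e(3) X by (simp add: le_divide_eq)
    then show ?thesis using e X by (simp add: algebra_simps)
  qed
  finally show "a \<le> X + t" by simp
qed

lemma seq_limit:
  fixes a A B :: real and d :: "nat \<Rightarrow> real"
  assumes "\<And>k. a \<le> A + B * d k" "d \<longlonglongrightarrow> 0"
  shows "a \<le> A"
proof -
  have "(\<lambda>k. A + B * d k) \<longlonglongrightarrow> A + B * 0" by (intro tendsto_intros assms(2))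
  then show ?thesis using assms(1) by (intro tendsto_lowerbound[of "\<lambda>k. A + B * d k"]) auto
qed

lemma Hspace_int:
  assumes H: "(u, u') \<in> Hspace R" and R: "R > 0"
  shows "u \<in> borel_measurable borel" "u' \<in> borel_measurable borel"
    "set_integrable lborel {0..R} (\<lambda>r. r * (u' r)^2)"
    "set_integrable lborel {0..R} (\<lambda>r. (u r)^2 / r)"
    "set_integrable lborel {0..R} (\<lambda>r. r * (u r)^2)"
    "set_integrable lborel {0..R} (\<lambda>r. r * (u' r)^2 + (u r)^2 / r)"
proof -
  have m: "u \<in> borel_measurable borel" "u' \<in> borel_measurable borel"
    and i: "set_integrable lborel {0..R} (\<lambda>r. r * (u' r)^2 + (u r)^2 / r)"
    using H unfolding Hspace_def by auto
  show "u \<in> borel_measurable borel" "u' \<in> borel_measurable borel"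
    "set_integrable lborel {0..R} (\<lambda>r. r * (u' r)^2 + (u r)^2 / r)" by fact+
  show i1: "set_integrable lborel {0..R} (\<lambda>r. r * (u' r)^2)"
  proof (rule set_integrable_bound[OF i])
    show "set_borel_measurable lborel {0..R} (\<lambda>r. r * (u' r)^2)"
      using m unfolding set_borel_measurable_def by measurable
    show "AE x in lborel. x \<in> {0..R} \<longrightarrow> norm (x * (u' x)^2) \<le> norm (x * (u' x)^2 + (u x)^2 / x)"
      by (rule AE_I2) auto
  qed
  show i2: "set_integrable lborel {0..R} (\<lambda>r. (u r)^2 / r)"
  proof (rule set_integrable_bound[OF i])
    show "set_borel_measurable lborel {0..R} (\<lambda>r. (u r)^2 / r)"
      using m unfolding set_borel_measurable_def by measurable
    show "AE x in lborel. x \<in> {0..R} \<longrightarrow> norm ((u x)^2 / x) \<le> norm (x * (u' x)^2 + (u x)^2 / x)"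
      by (rule AE_I2) auto
  qed
  have i3: "set_integrable lborel {0..R} (\<lambda>r. R^2 * ((u r)^2 / r))" by (rule set_integrable_mult_right[OF i2])
  show "set_integrable lborel {0..R} (\<lambda>r. r * (u r)^2)"
  proof (rule set_integrable_bound[OF i3])
    show "set_borel_measurable lborel {0..R} (\<lambda>r. r * (u r)^2)"
      using m unfolding set_borel_measurable_def by measurable
    show "AE x in lborel. x \<in> {0..R} \<longrightarrow> norm (x * (u x)^2) \<le> norm (R^2 * ((u x)^2 / x))"
    proof (rule AE_I2, rule impI)
      fix x assume x: "x \<in> {0..R}"
      show "norm (x * (u x)^2) \<le> norm (R^2 * ((u x)^2 / x))"
      proof (cases "x = 0")
        case False
        then have xp: "x > 0" using x by simp
        have "x * x \<le> R * R" using x by (intro mult_mono) auto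
        then have h: "x * x * (u x)^2 \<le> R * R * (u x)^2" by (rule mult_right_mono) simp
        have "x * (u x)^2 = (x * x * (u x)^2) / x" using xp by simp
        also have "\<dots> \<le> (R * R * (u x)^2) / x" using h xp by (intro divide_right_mono) auto
        also have "\<dots> = R^2 * ((u x)^2 / x)" by (simp add: power2_eq_square)
        finally have "x * (u x)^2 \<le> R^2 * ((u x)^2 / x)" .
        then show ?thesis using xp by simp
      qed simp
    qed
  qed
qed

lemma r_bound:
  fixes x y R :: real
  assumes "0 \<le> x" "x \<le> R" "0 \<le> y"
  shows "x * y \<le> R^2 * (y / x)"
proof (cases "x = 0")
  case False
  then have xp: "x > 0" using assms by simp
  have "x * x \<le> R * R" using assms by (intro mult_mono) auto
  then have h: "x * x * y \<le> R * R * y" using assms by (intro mult_right_mono) auto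
  have "x * y = (x * x * y) / x" using xp by simp
  also have "\<dots> \<le> (R * R * y) / x" using h xp by (intro divide_right_mono) auto
  also have "\<dots> = R^2 * (y / x)" by (simp add: power2_eq_square)
  finally show ?thesis .
qed simp

lemma set_nonneg:
  fixes f :: "real \<Rightarrow> real"
  assumes "\<And>x. x \<in> A \<Longrightarrow> 0 \<le> f x"
  shows "0 \<le> (LINT x:A|M. f x)"
  unfolding set_lebesgue_integral_def
  by (rule Bochner_Integration.integral_nonneg) (use assms in \<open>auto simp: indicator_def\<close>)

lemma Hspace_approx:
  assumes H: "(u, u') \<in> Hspace R" and R: "R > 0"
  obtains \<psi> \<psi>' where "\<And>k. C1_0 R (\<psi> k) (\<psi>' k)" "\<And>k. \<psi> k \<in> borel_measurable borel"
    "\<And>k. \<psi>' k \<in> borel_measurable borel"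
    "(\<lambda>k. Hnorm2 R (\<lambda>r. \<psi> k r - u r) (\<lambda>r. \<psi>' k r - u' r)) \<longlonglongrightarrow> 0"
proof -
  obtain \<phi> \<phi>' where C: "\<And>k. C1_0 R (\<phi> k) (\<phi>' k)"
    and lim: "(\<lambda>k. Hnorm2 R (\<lambda>r. \<phi> k r - u r) (\<lambda>r. \<phi>' k r - u' r)) \<longlonglongrightarrow> 0"
    using H unfolding Hspace_def by auto
  define \<psi> where "\<psi> k = restr R (\<phi> k)" for k
  define \<psi>' where "\<psi>' k = restr R (\<phi>' k)" for k
  have "Hnorm2 R (\<lambda>r. \<psi> k r - u r) (\<lambda>r. \<psi>' k r - u' r) = Hnorm2 R (\<lambda>r. \<phi> k r - u r) (\<lambda>r. \<phi>' k r - u' r)" for k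
    unfolding Hnorm2_def \<psi>_def \<psi>'_def by (rule set_lebesgue_integral_cong) (auto simp: restr_eq)
  then show ?thesis
    using that[of \<psi> \<psi>'] C1_restr[OF C R] lim unfolding \<psi>_def \<psi>'_def by auto
qed

lemma diff_facts:
  assumes H: "(u, u') \<in> Hspace R" and R: "R > 0" and C: "C1_0 R \<psi> \<psi>'"
    and m: "\<psi> \<in> borel_measurable borel" "\<psi>' \<in> borel_measurable borel"
  defines "d \<equiv> Hnorm2 R (\<lambda>r. \<psi> r - u r) (\<lambda>r. \<psi>' r - u' r)"
  shows "set_integrable lborel {0..R} (\<lambda>r. r * (\<psi>' r - u' r)^2)"
    "set_integrable lborel {0..R} (\<lambda>r. (\<psi> r - u r)^2 / r)"
    "set_integrable lborel {0..R} (\<lambda>r. r * (\<psi> r - u r)^2)"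
    "(LINT r:{0..R}|lborel. r * (\<psi>' r - u' r)^2) \<le> d"
    "(LINT r:{0..R}|lborel. (\<psi> r - u r)^2 / r) \<le> d"
    "(LINT r:{0..R}|lborel. r * (\<psi> r - u r)^2) \<le> R^2 * d"
    "d \<ge> 0"
proof -
  note HI = Hspace_int[OF H R]
  note CI = C1_integrable[OF C]
  note [measurable] = m HI(1,2)
  have ib: "set_integrable lborel {0..R} (\<lambda>r. 2 * (r * (\<psi>' r)^2 + (\<psi> r)^2 / r) + 2 * (r * (u' r)^2 + (u r)^2 / r))"
    by (intro set_integral_add(1) set_integrable_mult_right CI(3) HI(6))
  have iD: "set_integrable lborel {0..R} (\<lambda>r. r * (\<psi>' r - u' r)^2 + (\<psi> r - u r)^2 / r)"
  proof (rule set_integrable_bound[OF ib])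
    show "set_borel_measurable lborel {0..R} (\<lambda>r. r * (\<psi>' r - u' r)^2 + (\<psi> r - u r)^2 / r)"
      unfolding set_borel_measurable_def by measurable
    show "AE x in lborel. x \<in> {0..R} \<longrightarrow> norm (x * (\<psi>' x - u' x)^2 + (\<psi> x - u x)^2 / x)
       \<le> norm (2 * (x * (\<psi>' x)^2 + (\<psi> x)^2 / x) + 2 * (x * (u' x)^2 + (u x)^2 / x))"
    proof (rule AE_I2, rule impI)
      fix x :: real assume x: "x \<in> {0..R}"
      have s: "(a - b)^2 \<le> 2 * a^2 + 2 * b^2" for a b :: real
        using sum_squares_ge_zero[of "a + b" 0] by (simp add: power2_eq_square algebra_simps)
      have "x * (\<psi>' x - u' x)^2 \<le> x * (2 * (\<psi>' x)^2 + 2 * (u' x)^2)"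
        using x by (intro mult_left_mono s) auto
      moreover have "(\<psi> x - u x)^2 / x \<le> (2 * (\<psi> x)^2 + 2 * (u x)^2) / x"
        using x by (intro divide_right_mono s) auto
      ultimately show "norm (x * (\<psi>' x - u' x)^2 + (\<psi> x - u x)^2 / x)
       \<le> norm (2 * (x * (\<psi>' x)^2 + (\<psi> x)^2 / x) + 2 * (x * (u' x)^2 + (u x)^2 / x))"
        using x by (simp add: add_divide_distrib algebra_simps)
    qed
  qed
  show i1: "set_integrable lborel {0..R} (\<lambda>r. r * (\<psi>' r - u' r)^2)"
  proof (rule set_integrable_bound[OF iD])
    show "set_borel_measurable lborel {0..R} (\<lambda>r. r * (\<psi>' r - u' r)^2)"
      unfolding set_borel_measurable_def by measurable
  qed (rule AE_I2, auto)
  show i2: "set_integrable lborel {0..R} (\<lambda>r. (\<psi> r - u r)^2 / r)"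
  proof (rule set_integrable_bound[OF iD])
    show "set_borel_measurable lborel {0..R} (\<lambda>r. (\<psi> r - u r)^2 / r)"
      unfolding set_borel_measurable_def by measurable
  qed (rule AE_I2, auto)
  have i2': "set_integrable lborel {0..R} (\<lambda>r. R^2 * ((\<psi> r - u r)^2 / r))"
    by (rule set_integrable_mult_right[OF i2])
  show i3: "set_integrable lborel {0..R} (\<lambda>r. r * (\<psi> r - u r)^2)"
  proof (rule set_integrable_bound[OF i2'])
    show "set_borel_measurable lborel {0..R} (\<lambda>r. r * (\<psi> r - u r)^2)"
      unfolding set_borel_measurable_def by measurable
  qed (rule AE_I2, use r_bound in auto)
  have n1: "0 \<le> (LINT r:{0..R}|lborel. r * (\<psi>' r - u' r)^2)" by (rule set_nonneg) auto
  have n2: "0 \<le> (LINT r:{0..R}|lborel. (\<psi> r - u r)^2 / r)" by (rule set_nonneg) auto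
  have dd: "d = (LINT r:{0..R}|lborel. r * (\<psi>' r - u' r)^2) + (LINT r:{0..R}|lborel. (\<psi> r - u r)^2 / r)"
    unfolding d_def Hnorm2_def by (rule set_integral_add(2)[OF i1 i2])
  show "(LINT r:{0..R}|lborel. r * (\<psi>' r - u' r)^2) \<le> d"
    "(LINT r:{0..R}|lborel. (\<psi> r - u r)^2 / r) \<le> d" "d \<ge> 0"
    using n1 n2 dd by linarith+
  have "(LINT r:{0..R}|lborel. r * (\<psi> r - u r)^2) \<le> (LINT r:{0..R}|lborel. R^2 * ((\<psi> r - u r)^2 / r))"
    by (rule set_integral_mono[OF i3 i2']) (use r_bound in auto)
  also have "\<dots> = R^2 * (LINT r:{0..R}|lborel. (\<psi> r - u r)^2 / r)" by (rule set_integral_mult_right)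
  also have "\<dots> \<le> R^2 * d" using n1 n2 dd by (intro mult_left_mono) auto
  finally show "(LINT r:{0..R}|lborel. r * (\<psi> r - u r)^2) \<le> R^2 * d" .
qed

lemma Hspace_poincare:
  assumes H: "(u, u') \<in> Hspace R" and R: "R > 0" and \<rho>: "0 < \<rho>" "\<rho> < r0"
  shows "(\<rho>/R)^2 * (LINT r:{0..R}|lborel. r * (u r)^2) \<le> (LINT r:{0..R}|lborel. r * (u' r)^2)"
proof -
  note HI = Hspace_int[OF H R]
  obtain \<psi> \<psi>' where C: "\<And>k. C1_0 R (\<psi> k) (\<psi>' k)" and m: "\<And>k. \<psi> k \<in> borel_measurable borel"
    "\<And>k. \<psi>' k \<in> borel_measurable borel"
    and lim: "(\<lambda>k. Hnorm2 R (\<lambda>r. \<psi> k r - u r) (\<lambda>r. \<psi>' k r - u' r)) \<longlonglongrightarrow> 0"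
    using Hspace_approx[OF H R] by blast
  define d where "d k = Hnorm2 R (\<lambda>r. \<psi> k r - u r) (\<lambda>r. \<psi>' k r - u' r)" for k
  define c2 where "c2 = (\<rho>/R)^2"
  have c2: "c2 > 0" unfolding c2_def using \<rho> R by simp
  define Lu where "Lu = (LINT r:{0..R}|lborel. r * (u r)^2)"
  define Pu where "Pu = (LINT r:{0..R}|lborel. r * (u' r)^2)"
  have Pu0: "Pu \<ge> 0" unfolding Pu_def by (rule set_nonneg) auto
  have main: "c2 * Lu \<le> (1 + e)^2 * Pu + ((1 + e) * (1 + 1/e) + (1 + 1/e) * c2 * R^2) * d k"
    if e: "e > 0" for e k
  proof -
    note DF = diff_facts[OF H R C[of k] m(1)[of k] m(2)[of k], folded d_def]
    note CD = C1_0_D[OF C[of k]]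
    define L\<psi> where "L\<psi> = (LINT r:{0..R}|lborel. r * (\<psi> k r)^2)"
    define P\<psi> where "P\<psi> = (LINT r:{0..R}|lborel. r * (\<psi>' k r)^2)"
    define Ld where "Ld = (LINT r:{0..R}|lborel. r * (\<psi> k r - u r)^2)"
    define Pd where "Pd = (LINT r:{0..R}|lborel. r * (\<psi>' k r - u' r)^2)"
    have iL\<psi>: "set_integrable lborel {0..R} (\<lambda>r. r * (\<psi> k r)^2)"
      by (intro borel_integrable_atLeastAtMost' continuous_intros CD(5))
    have iP\<psi>: "set_integrable lborel {0..R} (\<lambda>r. r * (\<psi>' k r)^2)"
      by (intro borel_integrable_atLeastAtMost' continuous_intros CD(1))
    have ineq1: "Lu \<le> (1 + e) * L\<psi> + (1 + 1/e) * Ld"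
    proof -
      have "Lu \<le> (LINT r:{0..R}|lborel. (1 + e) * (r * (\<psi> k r)^2) + (1 + 1/e) * (r * (\<psi> k r - u r)^2))"
        unfolding Lu_def
      proof (rule set_integral_mono[OF HI(5)])
        show "set_integrable lborel {0..R} (\<lambda>r. (1 + e) * (r * (\<psi> k r)^2) + (1 + 1/e) * (r * (\<psi> k r - u r)^2))"
          by (intro set_integral_add(1) set_integrable_mult_right iL\<psi> DF(3))
        fix r :: real assume r: "r \<in> {0..R}"
        have "r * (u r)^2 \<le> r * ((1 + e) * (\<psi> k r)^2 + (1 + 1/e) * (u r - \<psi> k r)^2)"
          using r by (intro mult_left_mono sq_eps e) auto
        moreover have "(u r - \<psi> k r)^2 = (\<psi> k r - u r)^2" by (simp add: power2_commute)
        ultimately show "r * (u r)^2 \<le> (1 + e) * (r * (\<psi> k r)^2) + (1 + 1/e) * (r * (\<psi> k r - u r)^2)"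
          by (simp add: algebra_simps)
      qed
      also have "\<dots> = (1 + e) * L\<psi> + (1 + 1/e) * Ld"
        unfolding L\<psi>_def Ld_def
        by (subst set_integral_add(2)) (auto intro!: set_integrable_mult_right iL\<psi> DF(3))
      finally show ?thesis .
    qed
    have ineq3: "P\<psi> \<le> (1 + e) * Pu + (1 + 1/e) * Pd"
    proof -
      have "P\<psi> \<le> (LINT r:{0..R}|lborel. (1 + e) * (r * (u' r)^2) + (1 + 1/e) * (r * (\<psi>' k r - u' r)^2))"
        unfolding P\<psi>_def
      proof (rule set_integral_mono[OF iP\<psi>])
        show "set_integrable lborel {0..R} (\<lambda>r. (1 + e) * (r * (u' r)^2) + (1 + 1/e) * (r * (\<psi>' k r - u' r)^2))"
          by (intro set_integral_add(1) set_integrable_mult_right HI(3) DF(1))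
        fix r :: real assume r: "r \<in> {0..R}"
        have "r * (\<psi>' k r)^2 \<le> r * ((1 + e) * (u' r)^2 + (1 + 1/e) * (\<psi>' k r - u' r)^2)"
          using r by (intro mult_left_mono sq_eps e) auto
        then show "r * (\<psi>' k r)^2 \<le> (1 + e) * (r * (u' r)^2) + (1 + 1/e) * (r * (\<psi>' k r - u' r)^2)"
          by (simp add: algebra_simps)
      qed
      also have "\<dots> = (1 + e) * Pu + (1 + 1/e) * Pd"
        unfolding Pu_def Pd_def
        by (subst set_integral_add(2)) (auto intro!: set_integrable_mult_right HI(3) DF(1))
      finally show ?thesis .
    qed
    have ineq2: "c2 * L\<psi> \<le> P\<psi>" unfolding c2_def L\<psi>_def P\<psi>_def by (rule poincare_C1[OF C R \<rho>])
    have Ld: "Ld \<le> R^2 * d k" and Pd: "Pd \<le> d k" and d0: "d k \<ge> 0"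
      using DF(4,6,7) unfolding Ld_def Pd_def by auto
    have "1/e > 0" using e by simp
    then have e1: "1 + e > 0" "1 + 1/e > 0" using e by linarith+
    have "c2 * Lu \<le> (1 + e) * (c2 * L\<psi>) + (1 + 1/e) * (c2 * Ld)"
      using mult_left_mono[OF ineq1, of c2] c2 by (simp add: algebra_simps)
    also have "\<dots> \<le> (1 + e) * P\<psi> + (1 + 1/e) * (c2 * (R^2 * d k))"
      using ineq2 Ld c2 e1 by (intro add_mono mult_left_mono) auto
    also have "\<dots> \<le> (1 + e) * ((1 + e) * Pu + (1 + 1/e) * d k) + (1 + 1/e) * (c2 * (R^2 * d k))"
    proof -
      have "P\<psi> \<le> (1 + e) * Pu + (1 + 1/e) * d k"
        using ineq3 Pd e1 by (meson add_left_mono less_imp_le mult_left_mono order_trans)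
      then show ?thesis using e1 by (intro add_right_mono mult_left_mono) auto
    qed
    also have "\<dots> = (1 + e)^2 * Pu + ((1 + e) * (1 + 1/e) + (1 + 1/e) * c2 * R^2) * d k"
      by (simp add: power2_eq_square algebra_simps)
    finally show ?thesis .
  qed
  have lim': "d \<longlonglongrightarrow> 0" using lim unfolding d_def .
  have "c2 * Lu \<le> (1 + e)^2 * Pu" if "e > 0" for e
    by (rule seq_limit[OF main[OF that] lim'])
  then have "c2 * Lu \<le> Pu" by (intro eps_limit[OF Pu0]) auto
  then show ?thesis unfolding c2_def Lu_def Pu_def .
qed

lemma Hspace_sup:
  assumes H: "(u, u') \<in> Hspace R" and R: "R > 0"
  shows "AE x in lborel. x \<in> {0..R} \<longrightarrow> (u x)^2 \<le> Hnorm2 R u u'"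
proof -
  note HI = Hspace_int[OF H R]
  obtain \<psi> \<psi>' where C: "\<And>k. C1_0 R (\<psi> k) (\<psi>' k)" and m: "\<And>k. \<psi> k \<in> borel_measurable borel"
    "\<And>k. \<psi>' k \<in> borel_measurable borel"
    and lim: "(\<lambda>k. Hnorm2 R (\<lambda>r. \<psi> k r - u r) (\<lambda>r. \<psi>' k r - u' r)) \<longlonglongrightarrow> 0"
    using Hspace_approx[OF H R] by blast
  define d where "d k = Hnorm2 R (\<lambda>r. \<psi> k r - u r) (\<lambda>r. \<psi>' k r - u' r)" for k
  have lim': "d \<longlonglongrightarrow> 0" using lim unfolding d_def .
  define Nu where "Nu = Hnorm2 R u u'"
  have Nu0: "Nu \<ge> 0" unfolding Nu_def Hnorm2_def by (rule set_nonneg) auto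
  note DF = diff_facts[OF H R C m(1) m(2), folded d_def]
  have Nbound: "(\<psi> k x)^2 \<le> (1 + e) * Nu + (1 + 1/e) * d k" if e: "e > 0" and x: "x \<in> {0..R}" for e k x
  proof -
    have "(\<psi> k x)^2 \<le> Hnorm2 R (\<psi> k) (\<psi>' k)" by (rule C1_sup[OF C x])
    also have "\<dots> \<le> (LINT r:{0..R}|lborel. (1 + e) * (r * (u' r)^2 + (u r)^2 / r)
         + (1 + 1/e) * (r * (\<psi>' k r - u' r)^2 + (\<psi> k r - u r)^2 / r))"
      unfolding Hnorm2_def
    proof (rule set_integral_mono[OF C1_integrable(3)[OF C]])
      show "set_integrable lborel {0..R} (\<lambda>r. (1 + e) * (r * (u' r)^2 + (u r)^2 / r)
         + (1 + 1/e) * (r * (\<psi>' k r - u' r)^2 + (\<psi> k r - u r)^2 / r))"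
        by (intro set_integral_add(1) set_integrable_mult_right HI(6) DF(1) DF(2))
      fix r :: real assume r: "r \<in> {0..R}"
      have a: "r * (\<psi>' k r)^2 \<le> r * ((1 + e) * (u' r)^2 + (1 + 1/e) * (\<psi>' k r - u' r)^2)"
        using r by (intro mult_left_mono sq_eps e) auto
      have b: "(\<psi> k r)^2 / r \<le> ((1 + e) * (u r)^2 + (1 + 1/e) * (\<psi> k r - u r)^2) / r"
        using r by (intro divide_right_mono sq_eps e) auto
      show "r * (\<psi>' k r)^2 + (\<psi> k r)^2 / r \<le> (1 + e) * (r * (u' r)^2 + (u r)^2 / r)
         + (1 + 1/e) * (r * (\<psi>' k r - u' r)^2 + (\<psi> k r - u r)^2 / r)"
        using add_mono[OF a b] by (simp add: algebra_simps add_divide_distrib)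
    qed
    also have "\<dots> = (1 + e) * Nu + (1 + 1/e) * d k"
      unfolding Nu_def d_def Hnorm2_def
      by (subst set_integral_add(2)) (auto intro!: set_integrable_mult_right HI(6) set_integral_add(1) DF(1) DF(2))
    finally show ?thesis .
  qed
  define g where "g k x = indicator {0..R} x *\<^sub>R ((\<psi> k x - u x)^2 / x)" for k x
  have ig: "integrable lborel (g k)" for k
    using DF(2)[of k] unfolding set_integrable_def g_def[abs_def] .
  have gn: "(\<integral>x. norm (g k x) \<partial>lborel) = (LINT r:{0..R}|lborel. (\<psi> k r - u r)^2 / r)" for k
    unfolding set_lebesgue_integral_def g_def
    by (rule Bochner_Integration.integral_cong) (auto simp: indicator_def)
  have "(\<lambda>k. (\<integral>x. norm (g k x) \<partial>lborel)) \<longlonglongrightarrow> 0"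
  proof (rule tendsto_sandwich[OF _ _ tendsto_const lim'])
    show "\<forall>\<^sub>F k in sequentially. 0 \<le> (\<integral>x. norm (g k x) \<partial>lborel)" by simp
    show "\<forall>\<^sub>F k in sequentially. (\<integral>x. norm (g k x) \<partial>lborel) \<le> d k"
      unfolding gn using DF(5) by simp
  qed
  then obtain s :: "nat \<Rightarrow> nat" where s: "strict_mono s" and ae: "AE x in lborel. (\<lambda>n. g (s n) x) \<longlonglongrightarrow> 0"
    using tendsto_L1_AE_subseq[where u=g and M=lborel, OF ig] by blast
  have ds: "(\<lambda>n. d (s n)) \<longlonglongrightarrow> 0" using LIMSEQ_subseq_LIMSEQ[OF lim' s] by (simp add: o_def)
  show ?thesis
    using ae AE_lborel_singleton[of 0]
  proof eventually_elim
    case (elim x)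
    show ?case
    proof
      assume x: "x \<in> {0..R}"
      then have xp: "x > 0" using elim by simp
      have "(\<lambda>n. x * g (s n) x) \<longlonglongrightarrow> x * 0" by (intro tendsto_intros elim(1))
      moreover have "x * g (s n) x = (\<psi> (s n) x - u x)^2" for n using x xp by (simp add: g_def)
      ultimately have "(\<lambda>n. (\<psi> (s n) x - u x)^2) \<longlonglongrightarrow> 0" by simp
      then have "(\<lambda>n. sqrt ((\<psi> (s n) x - u x)^2)) \<longlonglongrightarrow> sqrt 0" by (rule tendsto_real_sqrt)
      then have "(\<lambda>n. \<bar>\<psi> (s n) x - u x\<bar>) \<longlonglongrightarrow> 0" by simp
      then have "(\<lambda>n. \<psi> (s n) x - u x) \<longlonglongrightarrow> 0" by (simp add: tendsto_rabs_zero_iff)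
      then have "(\<lambda>n. \<psi> (s n) x) \<longlonglongrightarrow> u x" by (rule LIM_zero_cancel)
      then have conv: "(\<lambda>n. (\<psi> (s n) x)^2) \<longlonglongrightarrow> (u x)^2" by (intro tendsto_intros)
      have "(u x)^2 \<le> (1 + e)^2 * Nu" if e: "e > 0" "e \<le> 1" for e
      proof -
        have "(\<lambda>n. (1 + e) * Nu + (1 + 1/e) * d (s n)) \<longlonglongrightarrow> (1 + e) * Nu + (1 + 1/e) * 0"
          by (intro tendsto_intros ds)
        then have "(u x)^2 \<le> (1 + e) * Nu + (1 + 1/e) * 0"
          by (rule tendsto_le[OF trivial_limit_sequentially _ conv]) (use Nbound[OF e(1) x] in auto)
        also have "\<dots> \<le> (1 + e)^2 * Nu"
        proof -
          have "(1 + e) * 1 \<le> (1 + e) * (1 + e)" using e by (intro mult_left_mono) auto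
          then show ?thesis using Nu0 by (simp add: power2_eq_square mult_right_mono)
        qed
        finally show ?thesis .
      qed
      then show "(u x)^2 \<le> Hnorm2 R u u'" unfolding Nu_def[symmetric] by (intro eps_limit[OF Nu0]) auto
    qed
  qed
qed

definition Psi :: "real \<Rightarrow> real \<Rightarrow> real \<Rightarrow> real" where
  "Psi \<alpha> s v = s^4 * v^2 / (1 + \<alpha> * s^2 * v)"
definition dPsi :: "real \<Rightarrow> real \<Rightarrow> real" where
  "dPsi \<alpha> v = (4 * v^2 + 2 * \<alpha> * v^3) / (1 + \<alpha> * v)^2"

lemma rem_bound_a:
  fixes a t :: real
  assumes a: "a \<ge> 0" and t: "\<bar>t\<bar> \<le> 1/2"
  shows "\<bar>(1+t)^4 * a^2 / (1 + a * (1+t)^2) - a^2 / (1 + a) - t * ((4 * a^2 + 2 * a^3) / (1 + a)^2)\<bar> \<le> t^2 * (a + 4)"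
proof -
  define s where "s = 1 + t"
  have s: "s > 0" "s \<le> 3/2" using t unfolding s_def by auto
  define X where "X = 1 + a * s^2"
  define Y where "Y = 1 + a"
  have X: "X \<ge> 1" unfolding X_def using a by simp
  have Y: "Y \<ge> 1" unfolding Y_def using a by simp
  have Xn: "X \<noteq> 0" and Yn: "Y \<noteq> 0" using X Y by auto
  have l: "s^4 * a^2 / X - a^2 / Y - t * ((4 * a^2 + 2 * a^3) / Y^2)
      = (s^4 * a^2 * Y^2 - a^2 * Y * X - t * (4 * a^2 + 2 * a^3) * X) / (Y^2 * X)"
    using Xn Yn by (simp add: field_simps power2_eq_square)
  have r: "a * t^2 - t^2 * (a * (1 - a * (1 + 2 * s))) / (Y^2 * X)
      = (a * t^2 * Y^2 * X - t^2 * (a * (1 - a * (1 + 2 * s)))) / (Y^2 * X)"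
    using Xn Yn by (simp add: field_simps power2_eq_square)
  have num: "s^4 * a^2 * Y^2 - a^2 * Y * X - t * (4 * a^2 + 2 * a^3) * X
      = a * t^2 * Y^2 * X - t^2 * (a * (1 - a * (1 + 2 * s)))"
    unfolding X_def Y_def s_def by algebra
  have eq: "s^4 * a^2 / X - a^2 / Y - t * ((4 * a^2 + 2 * a^3) / Y^2)
      = a * t^2 - t^2 * (a * (1 - a * (1 + 2 * s))) / (Y^2 * X)"
    unfolding l r num ..
  have b1: "\<bar>a * (1 - a * (1 + 2 * s))\<bar> \<le> 4 * (Y^2 * X)"
  proof -
    have "\<bar>a * (1 - a * (1 + 2 * s))\<bar> \<le> a * (1 + a * (1 + 2 * s))"
      using a s by (simp add: abs_mult abs_le_iff mult_left_mono)
    also have "\<dots> \<le> a * (1 + a * 4)" using a s by (intro mult_left_mono add_left_mono) auto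
    also have "\<dots> \<le> 4 * Y^2" unfolding Y_def using a by (simp add: power2_eq_square algebra_simps)
    also have "\<dots> \<le> 4 * (Y^2 * X)" using X Y by simp
    finally show ?thesis .
  qed
  have "\<bar>t^2 * (a * (1 - a * (1 + 2 * s))) / (Y^2 * X)\<bar> \<le> t^2 * 4"
  proof -
    have pos: "Y^2 * X > 0" using X Y by simp
    have "\<bar>t^2 * (a * (1 - a * (1 + 2 * s))) / (Y^2 * X)\<bar> = t^2 * (\<bar>a * (1 - a * (1 + 2 * s))\<bar> / (Y^2 * X))"
      using pos X by (simp add: abs_mult abs_divide)
    also have "\<dots> \<le> t^2 * 4"
      using b1 pos by (intro mult_left_mono) (auto simp: divide_le_eq)
    finally show ?thesis .
  qed
  moreover have "\<bar>a * t^2 - t^2 * (a * (1 - a * (1 + 2 * s))) / (Y^2 * X)\<bar>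
     \<le> \<bar>a * t^2\<bar> + \<bar>t^2 * (a * (1 - a * (1 + 2 * s))) / (Y^2 * X)\<bar>" by (rule abs_triangle_ineq4)
  moreover have "\<bar>a * t^2\<bar> = a * t^2" using a by simp
  ultimately have "\<bar>a * t^2 - t^2 * (a * (1 - a * (1 + 2 * s))) / (Y^2 * X)\<bar> \<le> t^2 * (a + 4)"
    by (simp add: algebra_simps)
  then show ?thesis using eq unfolding s_def X_def Y_def by (simp add: mult.commute)
qed

lemma rem_bound_v:
  fixes \<alpha> v t :: real
  assumes al: "\<alpha> > 0" and v: "v \<ge> 0" and t: "\<bar>t\<bar> \<le> 1/2"
  shows "\<bar>Psi \<alpha> (1+t) v - Psi \<alpha> 1 v - t * dPsi \<alpha> v\<bar> \<le> t^2 * (v / \<alpha> + 4 / \<alpha>^2)"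
proof -
  define a where "a = \<alpha> * v"
  have a: "a \<ge> 0" unfolding a_def using al v by simp
  have d1: "1 + \<alpha> * s^2 * v > 0" for s using al v by (simp add: add_pos_nonneg)
  have e1: "Psi \<alpha> s v = (s^4 * a^2 / (1 + a * s^2)) / \<alpha>^2" for s
  proof -
    have "1 + a * s^2 = 1 + \<alpha> * s^2 * v" unfolding a_def by (simp add: mult_ac)
    moreover have "1 + \<alpha> * s^2 * v \<noteq> 0" using d1[of s] by simp
    ultimately show ?thesis unfolding Psi_def a_def using al by (simp add: power_mult_distrib)
  qed
  have e2: "dPsi \<alpha> v = ((4 * a^2 + 2 * a^3) / (1 + a)^2) / \<alpha>^2"
  proof -
    have n: "4 * a^2 + 2 * a^3 = \<alpha>^2 * (4 * v^2 + 2 * \<alpha> * v^3)" unfolding a_def by algebra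
    have "1 + a = 1 + \<alpha> * v" unfolding a_def ..
    then show ?thesis unfolding dPsi_def n using al by simp
  qed
  have "Psi \<alpha> (1+t) v - Psi \<alpha> 1 v - t * dPsi \<alpha> v
      = ((1+t)^4 * a^2 / (1 + a * (1+t)^2) - a^2 / (1 + a) - t * ((4 * a^2 + 2 * a^3) / (1 + a)^2)) / \<alpha>^2"
    unfolding e1 e2 by (simp add: diff_divide_distrib)
  then have "\<bar>Psi \<alpha> (1+t) v - Psi \<alpha> 1 v - t * dPsi \<alpha> v\<bar>
      = \<bar>(1+t)^4 * a^2 / (1 + a * (1+t)^2) - a^2 / (1 + a) - t * ((4 * a^2 + 2 * a^3) / (1 + a)^2)\<bar> / \<alpha>^2"
    by (simp add: abs_divide)
  also have "\<dots> \<le> t^2 * (a + 4) / \<alpha>^2"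
    using rem_bound_a[OF a t] al by (intro divide_right_mono) auto
  also have "\<dots> = t^2 * (v / \<alpha> + 4 / \<alpha>^2)"
    unfolding a_def using al by (simp add: field_simps power2_eq_square)
  finally show ?thesis .
qed

lemma Psi_bounds:
  fixes \<alpha> v s :: real
  assumes al: "\<alpha> > 0" and v: "v \<ge> 0"
  shows "0 \<le> Psi \<alpha> s v" "Psi \<alpha> s v \<le> s^2 * v / \<alpha>" "0 \<le> dPsi \<alpha> v" "dPsi \<alpha> v \<le> 4 * v / \<alpha>"
    "2 * Psi \<alpha> 1 v - dPsi \<alpha> v = - 2 * (v^2 / (1 + \<alpha> * v)^2)"
proof -
  have d1: "1 + \<alpha> * s^2 * v > 0" using al v by (simp add: add_pos_nonneg)
  have d2: "1 + \<alpha> * v > 0" using al v by (simp add: add_pos_nonneg)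
  show "0 \<le> Psi \<alpha> s v" unfolding Psi_def using d1 by simp
  show "0 \<le> dPsi \<alpha> v" unfolding dPsi_def using al v by simp
  have "0 \<le> s * (s * v)" using mult_nonneg_nonneg[OF zero_le_square[of s] v] by (simp add: mult.assoc)
  then have "\<alpha> * (s^4 * v^2) \<le> s^2 * v * (1 + \<alpha> * s^2 * v)"
    by (simp add: algebra_simps power2_eq_square power4_eq_xxxx)
  then show "Psi \<alpha> s v \<le> s^2 * v / \<alpha>" unfolding Psi_def using d1 al
    by (simp add: divide_le_eq le_divide_eq mult.commute)
  have "\<alpha> * (4 * v^2 + 2 * \<alpha> * v^3) \<le> 4 * v * (1 + \<alpha> * v)^2"
  proof -
    have "0 \<le> 4 * v + 4 * \<alpha> * v^2 + 2 * \<alpha>^2 * v^3" using al v by simp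
    then show ?thesis by (simp add: algebra_simps power2_eq_square power3_eq_cube)
  qed
  then show "dPsi \<alpha> v \<le> 4 * v / \<alpha>" unfolding dPsi_def using d2 al
    by (simp add: divide_le_eq le_divide_eq mult.commute)
  define Y where "Y = 1 + \<alpha> * v"
  have Y: "Y \<noteq> 0" using d2 unfolding Y_def by simp
  have p1: "Psi \<alpha> 1 v = v^2 / Y" unfolding Psi_def Y_def by simp
  have "2 * (v^2 / Y) - (4 * v^2 + 2 * \<alpha> * v^3) / Y^2 = (2 * v^2 * Y - (4 * v^2 + 2 * \<alpha> * v^3)) / Y^2"
    using Y by (simp add: field_simps power2_eq_square)
  also have "2 * v^2 * Y - (4 * v^2 + 2 * \<alpha> * v^3) = - 2 * v^2" unfolding Y_def by algebra
  finally show "2 * Psi \<alpha> 1 v - dPsi \<alpha> v = - 2 * (v^2 / (1 + \<alpha> * v)^2)"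
    unfolding p1 dPsi_def Y_def[symmetric] by simp
qed

lemma gamma_pt:
  fixes \<alpha> r s b c n2 \<kappa> :: real
  assumes al: "\<alpha> > 0"
  shows "r * (s * b)^2 + n2 / r * (s * c)^2 - 2 * (1/\<alpha> - \<kappa>) * r * (s * c)^2
      + 2 * (1/\<alpha>) * (r * (s * c)^2 / (1 + \<alpha> * (s * c)^2))
    = s^2 * (r * b^2 + n2 * (c^2 / r) + 2 * \<kappa> * (r * c^2)) - 2 * (r * Psi \<alpha> s (c^2))"
proof -
  define w where "w = s * c"
  define D where "D = 1 + \<alpha> * w^2"
  have "0 \<le> \<alpha> * w^2" using al by simp
  then have D: "D \<noteq> 0" unfolding D_def by linarith
  have P: "Psi \<alpha> s (c^2) = w^4 / D"
    unfolding Psi_def D_def w_def by (simp add: power_mult_distrib mult_ac power4_eq_xxxx power2_eq_square)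
  have k: "2 * (1/\<alpha>) * (r * w^2 / D) - 2 * (1/\<alpha>) * r * w^2 = - 2 * (r * (w^4 / D))"
  proof -
    have "2 * (1/\<alpha>) * (r * w^2 / D) - 2 * (1/\<alpha>) * r * w^2 = (2 * r * w^2 - 2 * r * w^2 * D) / (\<alpha> * D)"
      using D al by (simp add: field_simps)
    also have "2 * r * w^2 - 2 * r * w^2 * D = \<alpha> * (- 2 * r * w^4)" unfolding D_def by algebra
    also have "\<alpha> * (- 2 * r * w^4) / (\<alpha> * D) = - 2 * (r * (w^4 / D))" using al D by simp
    finally show ?thesis .
  qed
  show ?thesis
    unfolding P D_def[symmetric] w_def[symmetric] using k
    by (simp add: w_def power_mult_distrib algebra_simps)
qed

lemma Psi_integrable:
  assumes H: "(u, u') \<in> Hspace R" and R: "R > 0" and al: "\<alpha> > 0"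
  shows "set_integrable lborel {0..R} (\<lambda>r. r * Psi \<alpha> s ((u r)^2))"
    "set_integrable lborel {0..R} (\<lambda>r. r * dPsi \<alpha> ((u r)^2))"
proof -
  note HI = Hspace_int[OF H R]
  note [measurable] = HI(1)
  show "set_integrable lborel {0..R} (\<lambda>r. r * Psi \<alpha> s ((u r)^2))"
  proof (rule set_integrable_bound[OF set_integrable_mult_right[OF HI(5), of "s^2 / \<alpha>"]])
    show "set_borel_measurable lborel {0..R} (\<lambda>r. r * Psi \<alpha> s ((u r)^2))"
      unfolding set_borel_measurable_def Psi_def by measurable
    show "AE x in lborel. x \<in> {0..R} \<longrightarrow> norm (x * Psi \<alpha> s ((u x)^2)) \<le> norm (s^2 / \<alpha> * (x * (u x)^2))"
    proof (rule AE_I2, rule impI)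
      fix x :: real assume x: "x \<in> {0..R}"
      have "x * Psi \<alpha> s ((u x)^2) \<le> x * (s^2 * (u x)^2 / \<alpha>)"
        using x Psi_bounds(2)[OF al, of "(u x)^2" s] by (intro mult_left_mono) auto
      moreover have "0 \<le> x * Psi \<alpha> s ((u x)^2)" using x Psi_bounds(1)[OF al, of "(u x)^2" s] by simp
      moreover have "x * (s^2 * (u x)^2 / \<alpha>) = s^2 / \<alpha> * (x * (u x)^2)" by simp
      ultimately show "norm (x * Psi \<alpha> s ((u x)^2)) \<le> norm (s^2 / \<alpha> * (x * (u x)^2))"
        by (metis abs_ge_self abs_of_nonneg order_trans real_norm_def)
    qed
  qed
  show "set_integrable lborel {0..R} (\<lambda>r. r * dPsi \<alpha> ((u r)^2))"
  proof (rule set_integrable_bound[OF set_integrable_mult_right[OF HI(5), of "4 / \<alpha>"]])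
    show "set_borel_measurable lborel {0..R} (\<lambda>r. r * dPsi \<alpha> ((u r)^2))"
      unfolding set_borel_measurable_def dPsi_def by measurable
    show "AE x in lborel. x \<in> {0..R} \<longrightarrow> norm (x * dPsi \<alpha> ((u x)^2)) \<le> norm (4 / \<alpha> * (x * (u x)^2))"
    proof (rule AE_I2, rule impI)
      fix x :: real assume x: "x \<in> {0..R}"
      have "x * dPsi \<alpha> ((u x)^2) \<le> x * (4 * (u x)^2 / \<alpha>)"
        using x Psi_bounds(4)[OF al, of "(u x)^2"] by (intro mult_left_mono) auto
      moreover have "0 \<le> x * dPsi \<alpha> ((u x)^2)" using x Psi_bounds(3)[OF al, of "(u x)^2"] by simp
      moreover have "x * (4 * (u x)^2 / \<alpha>) = 4 / \<alpha> * (x * (u x)^2)" by simp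
      ultimately show "norm (x * dPsi \<alpha> ((u x)^2)) \<le> norm (4 / \<alpha> * (x * (u x)^2))"
        by (metis abs_ge_self abs_of_nonneg order_trans real_norm_def)
    qed
  qed
qed

definition Qf :: "real \<Rightarrow> int \<Rightarrow> real \<Rightarrow> (real \<Rightarrow> real) \<Rightarrow> (real \<Rightarrow> real) \<Rightarrow> real" where
  "Qf R n \<kappa> u u' = (LINT r:{0..R}|lborel. r * (u' r)^2 + (real_of_int n)^2 * ((u r)^2 / r) + 2 * \<kappa> * (r * (u r)^2))"

lemma Q_integrable:
  assumes H: "(u, u') \<in> Hspace R" and R: "R > 0"
  shows "set_integrable lborel {0..R} (\<lambda>r. r * (u' r)^2 + (real_of_int n)^2 * ((u r)^2 / r) + 2 * \<kappa> * (r * (u r)^2))"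
  using Hspace_int[OF H R] by (intro set_integral_add(1) set_integrable_mult_right) auto

lemma gamma_scale:
  assumes H: "(u, u') \<in> Hspace R" and R: "R > 0" and al: "\<alpha> > 0"
  shows "gamma R n \<alpha> \<kappa> (Hscale s (u, u')) = s^2 / 2 * Qf R n \<kappa> u u' - (LINT r:{0..R}|lborel. r * Psi \<alpha> s ((u r)^2))"
proof -
  have "gamma R n \<alpha> \<kappa> (Hscale s (u, u')) = 1/2 * (LINT r:{0..R}|lborel.
      s^2 * (r * (u' r)^2 + (real_of_int n)^2 * ((u r)^2 / r) + 2 * \<kappa> * (r * (u r)^2)) - 2 * (r * Psi \<alpha> s ((u r)^2)))"
    unfolding gamma_def Hscale_def using gamma_pt[OF al] by simp
  also have "\<dots> = 1/2 * (s^2 * Qf R n \<kappa> u u' - 2 * (LINT r:{0..R}|lborel. r * Psi \<alpha> s ((u r)^2)))"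
    unfolding Qf_def
    by (simp only: set_integral_diff(2)[OF set_integrable_mult_right[OF Q_integrable[OF H R]]
          set_integrable_mult_right[OF Psi_integrable(1)[OF H R al]]] set_integral_mult_right)
  finally show ?thesis by simp
qed

lemma deriv_from_bound:
  fixes G :: "real \<Rightarrow> real"
  assumes d: "\<delta> > 0" and b: "\<And>t. \<bar>t\<bar> \<le> \<delta> \<Longrightarrow> \<bar>G t - G 0 - t * D\<bar> \<le> K * t^2"
  shows "(G has_real_derivative D) (at 0)"
proof -
  have "((\<lambda>t. (G t - G 0) / t - D) \<longlongrightarrow> 0) (at 0)"
  proof (rule Lim_null_comparison)
    show "((\<lambda>t. \<bar>K\<bar> * \<bar>t\<bar>) \<longlongrightarrow> 0) (at 0)"
    proof -
      have "((\<lambda>t. \<bar>K\<bar> * \<bar>t\<bar>) \<longlongrightarrow> \<bar>K\<bar> * \<bar>0\<bar>) (at (0::real))" by (intro tendsto_intros)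
      then show ?thesis by simp
    qed
    show "\<forall>\<^sub>F t in at 0. norm ((G t - G 0) / t - D) \<le> \<bar>K\<bar> * \<bar>t\<bar>"
      unfolding eventually_at
    proof (intro exI[of _ \<delta>] conjI ballI impI)
      show "\<delta> > 0" by fact
      fix t :: real assume t: "t \<noteq> 0 \<and> dist t 0 < \<delta>"
      then have tn: "t \<noteq> 0" and tl: "\<bar>t\<bar> \<le> \<delta>" by auto
      have "(G t - G 0) / t - D = (G t - G 0 - t * D) / t" using tn by (simp add: field_simps)
      then have "norm ((G t - G 0) / t - D) = \<bar>G t - G 0 - t * D\<bar> / \<bar>t\<bar>" by (simp add: abs_divide)
      also have "\<dots> \<le> K * t^2 / \<bar>t\<bar>" using b[OF tl] tn by (intro divide_right_mono) auto
      also have "K * t^2 / \<bar>t\<bar> = K * \<bar>t\<bar>"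
      proof -
        have "t^2 = \<bar>t\<bar> * \<bar>t\<bar>" by (simp add: power2_eq_square)
        then show ?thesis using tn by (subst \<open>t^2 = _\<close>) (simp del: abs_mult_self_eq)
      qed
      also have "\<dots> \<le> \<bar>K\<bar> * \<bar>t\<bar>" by (intro mult_right_mono) auto
      finally show "norm ((G t - G 0) / t - D) \<le> \<bar>K\<bar> * \<bar>t\<bar>" .
    qed
  qed
  then have "((\<lambda>t. (G t - G 0) / (t - 0)) \<longlongrightarrow> D) (at 0)"
    by (simp add: LIM_zero_iff)
  then show ?thesis by (simp add: DERIV_def LIM_equal)
qed

lemma set_abs_bound:
  fixes f g :: "real \<Rightarrow> real"
  assumes "set_integrable M A f" "set_integrable M A g" "\<And>x. x \<in> A \<Longrightarrow> \<bar>f x\<bar> \<le> g x"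
  shows "\<bar>LINT x:A|M. f x\<bar> \<le> (LINT x:A|M. g x)"
proof -
  have im: "set_integrable M A (\<lambda>x. - f x)" using set_integrable_mult_right[OF assms(1), of "-1"] by simp
  have "(LINT x:A|M. f x) \<le> (LINT x:A|M. g x)"
    by (rule set_integral_mono[OF assms(1,2)]) (use assms(3) in force)
  moreover have "(LINT x:A|M. - f x) \<le> (LINT x:A|M. g x)"
  proof (rule set_integral_mono[OF im assms(2)])
    fix x assume "x \<in> A" then show "- f x \<le> g x" using assms(3)[of x] by linarith
  qed
  moreover have "(LINT x:A|M. - f x) = - (LINT x:A|M. f x)" by (rule set_integral_uminus[OF assms(1)])
  ultimately show ?thesis by linarith
qed

lemma gamma_deriv:
  assumes H: "(u, u') \<in> Hspace R" and R: "R > 0" and al: "\<alpha> > 0"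
  shows "((\<lambda>t. gamma R n \<alpha> \<kappa> (Hscale (1 + t) (u, u'))) has_real_derivative
     (Qf R n \<kappa> u u' - (LINT r:{0..R}|lborel. r * dPsi \<alpha> ((u r)^2)))) (at 0)"
proof -
  note HI = Hspace_int[OF H R]
  define Q where "Q = Qf R n \<kappa> u u'"
  define A where "A s = (LINT r:{0..R}|lborel. r * Psi \<alpha> s ((u r)^2))" for s
  define A' where "A' = (LINT r:{0..R}|lborel. r * dPsi \<alpha> ((u r)^2))"
  define C where "C = (LINT r:{0..R}|lborel. r * ((u r)^2 / \<alpha> + 4 / \<alpha>^2))"
  define G where "G t = gamma R n \<alpha> \<kappa> (Hscale (1 + t) (u, u'))" for t
  have G: "G t = (1 + t)^2 / 2 * Q - A (1 + t)" for t
    unfolding G_def Q_def A_def by (rule gamma_scale[OF H R al])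
  have iC: "set_integrable lborel {0..R} (\<lambda>r. r * ((u r)^2 / \<alpha> + 4 / \<alpha>^2))"
  proof -
    have i: "set_integrable lborel {0..R} (\<lambda>r. 1 / \<alpha> * (r * (u r)^2) + 4 / \<alpha>^2 * r)"
      by (intro set_integral_add(1) set_integrable_mult_right HI(5) borel_integrable_atLeastAtMost' continuous_intros)
    show ?thesis by (rule set_integrable_cong[THEN iffD1, OF refl refl _ i]) (simp add: algebra_simps)
  qed
  have main: "\<bar>G t - G 0 - t * (Q - A')\<bar> \<le> (\<bar>Q\<bar> / 2 + C) * t^2" if t: "\<bar>t\<bar> \<le> 1/2" for t
  proof -
    note i1 = Psi_integrable(1)[OF H R al, of "1 + t"]
    note i2 = Psi_integrable(1)[OF H R al, of 1]
    note i3 = set_integrable_mult_right[OF Psi_integrable(2)[OF H R al], of t]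
    have "(LINT r:{0..R}|lborel. r * Psi \<alpha> (1+t) ((u r)^2) - r * Psi \<alpha> 1 ((u r)^2) - t * (r * dPsi \<alpha> ((u r)^2)))
        = A (1 + t) - A 1 - t * A'"
      unfolding A_def A'_def
      by (simp only: set_integral_diff(2)[OF set_integral_diff(1)[OF i1 i2] i3] set_integral_diff(2)[OF i1 i2]
          set_integral_mult_right)
    moreover have "(\<lambda>r. r * Psi \<alpha> (1+t) ((u r)^2) - r * Psi \<alpha> 1 ((u r)^2) - t * (r * dPsi \<alpha> ((u r)^2)))
       = (\<lambda>r. r * (Psi \<alpha> (1+t) ((u r)^2) - Psi \<alpha> 1 ((u r)^2) - t * dPsi \<alpha> ((u r)^2)))"
      by (simp add: algebra_simps)
    moreover have ir: "set_integrable lborel {0..R} (\<lambda>r. r * Psi \<alpha> (1+t) ((u r)^2) - r * Psi \<alpha> 1 ((u r)^2) - t * (r * dPsi \<alpha> ((u r)^2)))"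
      by (intro set_integral_diff(1) i1 i2 i3)
    ultimately have rem: "A (1 + t) - A 1 - t * A' = (LINT r:{0..R}|lborel. r * (Psi \<alpha> (1+t) ((u r)^2) - Psi \<alpha> 1 ((u r)^2) - t * dPsi \<alpha> ((u r)^2)))"
      and ir': "set_integrable lborel {0..R} (\<lambda>r. r * (Psi \<alpha> (1+t) ((u r)^2) - Psi \<alpha> 1 ((u r)^2) - t * dPsi \<alpha> ((u r)^2)))"
      by auto
    have "\<bar>A (1 + t) - A 1 - t * A'\<bar> \<le> (LINT r:{0..R}|lborel. t^2 * (r * ((u r)^2 / \<alpha> + 4 / \<alpha>^2)))"
      unfolding rem
    proof (rule set_abs_bound[OF ir' set_integrable_mult_right[OF iC]])
      fix r :: real assume r: "r \<in> {0..R}"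
      have "\<bar>r * (Psi \<alpha> (1+t) ((u r)^2) - Psi \<alpha> 1 ((u r)^2) - t * dPsi \<alpha> ((u r)^2))\<bar>
          = r * \<bar>Psi \<alpha> (1+t) ((u r)^2) - Psi \<alpha> 1 ((u r)^2) - t * dPsi \<alpha> ((u r)^2)\<bar>"
        using r by (simp add: abs_mult)
      also have "\<dots> \<le> r * (t^2 * ((u r)^2 / \<alpha> + 4 / \<alpha>^2))"
        using r by (intro mult_left_mono rem_bound_v[OF al _ t]) auto
      finally show "\<bar>r * (Psi \<alpha> (1+t) ((u r)^2) - Psi \<alpha> 1 ((u r)^2) - t * dPsi \<alpha> ((u r)^2))\<bar>
          \<le> t^2 * (r * ((u r)^2 / \<alpha> + 4 / \<alpha>^2))" by (simp add: mult_ac)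
    qed
    also have "\<dots> = t^2 * C" unfolding C_def by (rule set_integral_mult_right)
    finally have b: "\<bar>A (1 + t) - A 1 - t * A'\<bar> \<le> t^2 * C" .
    have "G t - G 0 - t * (Q - A') = t^2 / 2 * Q - (A (1 + t) - A 1 - t * A')"
      unfolding G by (simp add: power2_eq_square algebra_simps)
    also have "\<bar>\<dots>\<bar> \<le> \<bar>t^2 / 2 * Q\<bar> + \<bar>A (1 + t) - A 1 - t * A'\<bar>" by (rule abs_triangle_ineq4)
    also have "\<dots> \<le> t^2 / 2 * \<bar>Q\<bar> + t^2 * C" using b by (simp add: abs_mult)
    also have "\<dots> = (\<bar>Q\<bar> / 2 + C) * t^2" by (simp add: algebra_simps)
    finally show ?thesis .
  qed
  have "(G has_real_derivative (Q - A')) (at 0)"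
    by (rule deriv_from_bound[of "1/2"]) (use main in auto)
  then show ?thesis unfolding G_def Q_def A'_def .
qed

lemma coercive:
  fixes P W L k n2 K \<kappa> :: real
  assumes P: "k * L \<le> P" and WL: "L \<le> R^2 * W" and R: "R > 0" and L0: "L \<ge> 0" and W0: "W \<ge> 0" and P0: "P \<ge> 0"
    and n2: "n2 \<ge> 1" and Kdef: "K = (k * R^2 + n2) / R^2" and Kk: "K + 2 * \<kappa> > 0" and k: "k > 0"
  shows "P + n2 * W + 2 * \<kappa> * L \<ge> min 1 (1 + 2 * \<kappa> / K) * (P + W)"
proof -
  have Kp: "K > 0" unfolding Kdef using k R n2 by (simp add: add_pos_pos)
  have "n2 * L \<le> R^2 * (n2 * W)" using WL n2 by (simp add: mult_left_mono algebra_simps)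
  then have "n2 / R^2 * L \<le> n2 * W" using R by (simp add: field_simps)
  then have KL: "K * L \<le> P + n2 * W" unfolding Kdef using P R by (simp add: add_divide_distrib algebra_simps)
  have PW: "P + W \<le> P + n2 * W" using n2 W0 by (simp add: mult_right_mono[of 1 n2 W, simplified])
  show ?thesis
  proof (cases "\<kappa> \<ge> 0")
    case True
    have "min 1 (1 + 2 * \<kappa> / K) * (P + W) \<le> 1 * (P + W)" using P0 W0 by (intro mult_right_mono) auto
    also have "\<dots> \<le> P + n2 * W + 2 * \<kappa> * L"
    proof -
      have "0 \<le> 2 * \<kappa> * L" using True L0 by simp
      then show ?thesis using PW by (simp only: mult_1)
    qed
    finally show ?thesis .
  next
    case False
    have "2 * \<kappa> * L \<ge> 2 * \<kappa> / K * (P + n2 * W)"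
    proof -
      have "L \<le> (P + n2 * W) / K" using KL Kp by (simp add: le_divide_eq mult.commute)
      then have "2 * \<kappa> * ((P + n2 * W) / K) \<le> 2 * \<kappa> * L" using False by (intro mult_left_mono_neg) auto
      then show ?thesis by simp
    qed
    then have "P + n2 * W + 2 * \<kappa> * L \<ge> (1 + 2 * \<kappa> / K) * (P + n2 * W)" by (simp add: algebra_simps)
    moreover have "1 + 2 * \<kappa> / K > 0" using Kk Kp by (simp add: field_simps)
    then have "(1 + 2 * \<kappa> / K) * (P + W) \<le> (1 + 2 * \<kappa> / K) * (P + n2 * W)" using PW by (intro mult_left_mono) auto
    moreover have "min 1 (1 + 2 * \<kappa> / K) * (P + W) \<le> (1 + 2 * \<kappa> / K) * (P + W)"
      using P0 W0 by (intro mult_right_mono) auto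
    ultimately show ?thesis by linarith
  qed
qed

lemma final_arith:
  fixes \<theta> N L W E R \<alpha> A1 :: real
  assumes th: "\<theta> > 0" and N: "N > 0" and R: "R > 0" and al: "\<alpha> > 0"
    and QN: "\<theta> * N \<le> 2 * A1" and A1L: "A1 \<le> N * L" and L: "L \<le> R^2 * N" and A1E: "A1 \<le> (1 + \<alpha> * N) * E"
  shows "E \<ge> \<theta> * (\<theta> / (2 * R^2)) / (2 * (1 + \<alpha> * (\<theta> / (2 * R^2))))"
proof -
  define N0 where "N0 = \<theta> / (2 * R^2)"
  have N0p: "N0 > 0" unfolding N0_def using th R by simp
  have "\<theta> * N \<le> 2 * (N * (R^2 * N))" using QN A1L L N by (smt (verit) mult_left_mono)
  then have "\<theta> \<le> 2 * R^2 * N" using N by (simp add: algebra_simps power2_eq_square)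
  then have NN0: "N0 \<le> N" unfolding N0_def using R by (simp add: field_simps)
  have d: "1 + \<alpha> * N > 0" "1 + \<alpha> * N0 > 0" using al N N0p by (simp_all add: add_pos_pos)
  have "\<theta> * N \<le> 2 * ((1 + \<alpha> * N) * E)" using QN A1E by linarith
  then have EN: "\<theta> * N / (2 * (1 + \<alpha> * N)) \<le> E" using d by (simp add: divide_le_eq mult_ac)
  have "N0 / (1 + \<alpha> * N0) \<le> N / (1 + \<alpha> * N)"
    using d NN0 by (simp add: divide_le_eq le_divide_eq algebra_simps)
  then have "\<theta> * (N0 / (1 + \<alpha> * N0)) / 2 \<le> \<theta> * (N / (1 + \<alpha> * N)) / 2"
    using th by (intro divide_right_mono mult_left_mono) auto
  then have "\<theta> * N0 / (2 * (1 + \<alpha> * N0)) \<le> \<theta> * N / (2 * (1 + \<alpha> * N))" by (simp add: field_simps)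
  with EN show ?thesis unfolding N0_def by linarith
qed

lemma Psi1_bounds:
  fixes \<alpha> v N :: real
  assumes al: "\<alpha> > 0" and v: "0 \<le> v" "v \<le> N"
  shows "Psi \<alpha> 1 v \<le> N * v" "Psi \<alpha> 1 v \<le> (1 + \<alpha> * N) * (v^2 / (1 + \<alpha> * v)^2)"
proof -
  have d: "1 + \<alpha> * v \<ge> 1" using al v by simp
  have p: "Psi \<alpha> 1 v = v^2 / (1 + \<alpha> * v)" unfolding Psi_def by simp
  have "v^2 / (1 + \<alpha> * v) \<le> v^2" using divide_left_mono[of 1 "1 + \<alpha> * v" "v^2"] d by simp
  also have "v^2 \<le> N * v" using v by (simp add: power2_eq_square mult_right_mono)
  finally show "Psi \<alpha> 1 v \<le> N * v" unfolding p .
  have "v^2 / (1 + \<alpha> * v) = (1 + \<alpha> * v) * (v^2 / (1 + \<alpha> * v)^2)"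
    using d by (simp add: power2_eq_square)
  also have "\<dots> \<le> (1 + \<alpha> * N) * (v^2 / (1 + \<alpha> * v)^2)"
    using al v by (intro mult_right_mono) auto
  finally show "Psi \<alpha> 1 v \<le> (1 + \<alpha> * N) * (v^2 / (1 + \<alpha> * v)^2)" unfolding p .
qed

theorem lemma4p3:
  fixes n :: int and \<alpha> R \<kappa> :: real
  assumes "\<bar>n\<bar> \<ge> 1" and "\<alpha> > 0" and "R > 0"
    and "- (r0^2 + (real_of_int n)^2) / (2 * R^2) < \<kappa>"
    and "\<kappa> < 1/\<alpha> - (r0^2 + (real_of_int n)^2) / (2 * R^2)"
  shows "\<exists>C2 > 0. \<forall>u \<in> Mset R n \<alpha> \<kappa>.
           \<exists>D. ((\<lambda>t. gamma R n \<alpha> \<kappa> (Hscale (1 + t) u)) has_real_derivative D) (at 0)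
               \<and> D < - C2"
proof -
  note nn = assms(1) and al = assms(2) and R = assms(3)
  define n2 where "n2 = (real_of_int n)^2"
  have n2: "n2 \<ge> 1"
  proof -
    have "(1::real) \<le> \<bar>real_of_int n\<bar>" using nn by linarith
    then have "1^2 \<le> \<bar>real_of_int n\<bar>^2" by (intro power_mono) auto
    then show ?thesis unfolding n2_def by simp
  qed
  have R2: "R^2 > 0" using R by simp
  define g where "g = 2 * \<kappa> * R^2 + r0^2 + n2"
  have g: "g > 0"
  proof -
    have "- (r0^2 + n2) < \<kappa> * (2 * R^2)" using assms(4) R2 unfolding n2_def by (simp add: divide_less_eq)
    then show ?thesis unfolding g_def by (simp add: algebra_simps)
  qed
  have r0p: "r0 > 0" using r0_props(1) by simp
  define \<rho> where "\<rho> = sqrt (max (r0^2 / 4) (r0^2 - g / 2))"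
  have \<rho>: "0 < \<rho>" "\<rho> < r0" "\<rho>^2 + n2 + 2 * \<kappa> * R^2 > 0"
  proof -
    have m0: "max (r0^2 / 4) (r0^2 - g / 2) > 0" using r0p by (simp add: less_max_iff_disj)
    have m1: "max (r0^2 / 4) (r0^2 - g / 2) < r0^2" using r0p g by simp
    show "0 < \<rho>" unfolding \<rho>_def using m0 by simp
    have "\<rho> < sqrt (r0^2)" unfolding \<rho>_def using m1 by (simp only: real_sqrt_less_iff)
    then show "\<rho> < r0" using r0p by simp
    have "\<rho>^2 = max (r0^2 / 4) (r0^2 - g / 2)" unfolding \<rho>_def using m0 by simp
    then have "\<rho>^2 \<ge> r0^2 - g / 2" by simp
    then show "\<rho>^2 + n2 + 2 * \<kappa> * R^2 > 0" using g unfolding g_def by (simp add: field_simps)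
  qed
  define k where "k = (\<rho> / R)^2"
  have k: "k > 0" unfolding k_def using \<rho> R by simp
  define K where "K = (k * R^2 + n2) / R^2"
  have Kk: "K + 2 * \<kappa> > 0"
  proof -
    have "k * R^2 = \<rho>^2" unfolding k_def using R by (simp add: power_divide)
    then have "K = (\<rho>^2 + n2) / R^2" unfolding K_def by simp
    then have "K + 2 * \<kappa> = (\<rho>^2 + n2 + 2 * \<kappa> * R^2) / R^2" using R2 by (simp add: field_simps)
    then show ?thesis using \<rho>(3) R2 by simp
  qed
  define \<theta> where "\<theta> = min 1 (1 + 2 * \<kappa> / K)"
  have Kp: "K > 0" unfolding K_def using k R2 n2 by (simp add: add_pos_pos)
  have th: "\<theta> > 0" unfolding \<theta>_def using Kk Kp by (simp add: field_simps)
  define C where "C = \<theta> * (\<theta> / (2 * R^2)) / (2 * (1 + \<alpha> * (\<theta> / (2 * R^2))))"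
  have Cp: "C > 0" unfolding C_def using th R2 al by (simp add: add_pos_pos)
  show ?thesis
  proof (rule exI[of _ C], intro conjI ballI)
    show "C > 0" by fact
    fix p assume pM: "p \<in> Mset R n \<alpha> \<kappa>"
    obtain u u' where p: "p = (u, u')" by (cases p)
    have H: "(u, u') \<in> Hspace R" and Nne: "Hnorm2 R u u' \<noteq> 0" and g0: "gamma R n \<alpha> \<kappa> (u, u') = 0"
      using pM unfolding Mset_def p by auto
    show "\<exists>D. ((\<lambda>t. gamma R n \<alpha> \<kappa> (Hscale (1 + t) p)) has_real_derivative D) (at 0) \<and> D < - C"
    proof -
      note HI = Hspace_int[OF H R]
      note [measurable] = HI(1)
      define N where "N = Hnorm2 R u u'"
      define P where "P = (LINT r:{0..R}|lborel. r * (u' r)^2)"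
      define W where "W = (LINT r:{0..R}|lborel. (u r)^2 / r)"
      define L where "L = (LINT r:{0..R}|lborel. r * (u r)^2)"
      define Q where "Q = Qf R n \<kappa> u u'"
      define A1 where "A1 = (LINT r:{0..R}|lborel. r * Psi \<alpha> 1 ((u r)^2))"
      define A' where "A' = (LINT r:{0..R}|lborel. r * dPsi \<alpha> ((u r)^2))"
      define E where "E = (LINT r:{0..R}|lborel. r * ((u r)^2)^2 / (1 + \<alpha> * (u r)^2)^2)"
      have P0: "P \<ge> 0" unfolding P_def by (rule set_nonneg) auto
      have W0: "W \<ge> 0" unfolding W_def by (rule set_nonneg) auto
      have L0: "L \<ge> 0" unfolding L_def by (rule set_nonneg) auto
      have NPW: "N = P + W" unfolding N_def Hnorm2_def P_def W_def by (rule set_integral_add(2)[OF HI(3) HI(4)])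
      have Np: "N > 0" using Nne P0 W0 NPW unfolding N_def by linarith
      have QPWL: "Q = P + n2 * W + 2 * \<kappa> * L"
        unfolding Q_def Qf_def P_def W_def L_def n2_def
        by (simp only: set_integral_add(2)[OF set_integral_add(1)[OF HI(3) set_integrable_mult_right[OF HI(4)]] set_integrable_mult_right[OF HI(5)]]
            set_integral_add(2)[OF HI(3) set_integrable_mult_right[OF HI(4)]] set_integral_mult_right)
      have kL: "k * L \<le> P" unfolding k_def L_def P_def by (rule Hspace_poincare[OF H R \<rho>(1) \<rho>(2)])
      have LW: "L \<le> R^2 * W"
      proof -
        have "L \<le> (LINT r:{0..R}|lborel. R^2 * ((u r)^2 / r))"
          unfolding L_def by (rule set_integral_mono[OF HI(5) set_integrable_mult_right[OF HI(4)]]) (use r_bound in auto)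
        also have "\<dots> = R^2 * W" unfolding W_def by (rule set_integral_mult_right)
        finally show ?thesis .
      qed
      have QN: "\<theta> * N \<le> Q" unfolding QPWL NPW \<theta>_def
        by (rule coercive[OF kL LW R L0 W0 P0 n2 K_def Kk k])
      have "gamma R n \<alpha> \<kappa> (Hscale 1 (u, u')) = 1^2 / 2 * Q - A1"
        unfolding Q_def A1_def by (rule gamma_scale[OF H R al])
      moreover have "Hscale 1 (u, u') = (u, u')" unfolding Hscale_def by simp
      ultimately have QA: "Q = 2 * A1" using g0 by simp
      have AE: "AE x in lborel. x \<in> {0..R} \<longrightarrow> (u x)^2 \<le> N" unfolding N_def by (rule Hspace_sup[OF H R])
      have ie0: "set_integrable lborel {0..R} (\<lambda>r. 2 * (r * Psi \<alpha> 1 ((u r)^2)) - r * dPsi \<alpha> ((u r)^2))"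
        by (intro set_integral_diff(1) set_integrable_mult_right Psi_integrable[OF H R al])
      have eq0: "2 * (r * Psi \<alpha> 1 ((u r)^2)) - r * dPsi \<alpha> ((u r)^2) = - 2 * (r * ((u r)^2)^2 / (1 + \<alpha> * (u r)^2)^2)" for r
      proof -
        have "2 * (r * Psi \<alpha> 1 ((u r)^2)) - r * dPsi \<alpha> ((u r)^2) = r * (2 * Psi \<alpha> 1 ((u r)^2) - dPsi \<alpha> ((u r)^2))"
          by (simp add: algebra_simps)
        also have "\<dots> = - 2 * (r * ((u r)^2)^2 / (1 + \<alpha> * (u r)^2)^2)"
          unfolding Psi_bounds(5)[OF al zero_le_power2] by simp
        finally show ?thesis .
      qed
      have ie1: "set_integrable lborel {0..R} (\<lambda>r. - 2 * (r * ((u r)^2)^2 / (1 + \<alpha> * (u r)^2)^2))"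
        using ie0 unfolding eq0 .
      have ie: "set_integrable lborel {0..R} (\<lambda>r. r * ((u r)^2)^2 / (1 + \<alpha> * (u r)^2)^2)"
        using set_integrable_mult_right[OF ie1, of "-1/2"] by simp
      have D0: "Q - A' = - 2 * E"
      proof -
        have "Q - A' = 2 * A1 - A'" using QA by simp
        also have "\<dots> = (LINT r:{0..R}|lborel. 2 * (r * Psi \<alpha> 1 ((u r)^2)) - r * dPsi \<alpha> ((u r)^2))"
          unfolding A1_def A'_def
          by (simp only: set_integral_diff(2)[OF set_integrable_mult_right[OF Psi_integrable(1)[OF H R al]] Psi_integrable(2)[OF H R al]]
              set_integral_mult_right)
        also have "\<dots> = (LINT r:{0..R}|lborel. - 2 * (r * ((u r)^2)^2 / (1 + \<alpha> * (u r)^2)^2))"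
          unfolding eq0 ..
        also have "\<dots> = - 2 * E" unfolding E_def by (rule set_integral_mult_right)
        finally show ?thesis .
      qed
      have A1L: "A1 \<le> N * L"
      proof -
        have "A1 \<le> (LINT r:{0..R}|lborel. N * (r * (u r)^2))"
          unfolding A1_def
        proof (rule set_integral_mono_AE[OF Psi_integrable(1)[OF H R al] set_integrable_mult_right[OF HI(5)]])
          show "AE x \<in> {0..R} in lborel. x * Psi \<alpha> 1 ((u x)^2) \<le> N * (x * (u x)^2)"
            using AE
          proof eventually_elim
            case (elim x)
            show ?case
            proof
              assume x: "x \<in> {0..R}"
              have "x * Psi \<alpha> 1 ((u x)^2) \<le> x * (N * (u x)^2)"
                using x elim Psi1_bounds(1)[OF al zero_le_power2] by (intro mult_left_mono) auto
              then show "x * Psi \<alpha> 1 ((u x)^2) \<le> N * (x * (u x)^2)" by (simp add: mult_ac)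
            qed
          qed
        qed
        also have "\<dots> = N * L" unfolding L_def by (rule set_integral_mult_right)
        finally show ?thesis .
      qed
      have A1E: "A1 \<le> (1 + \<alpha> * N) * E"
      proof -
        have "A1 \<le> (LINT r:{0..R}|lborel. (1 + \<alpha> * N) * (r * ((u r)^2)^2 / (1 + \<alpha> * (u r)^2)^2))"
          unfolding A1_def
        proof (rule set_integral_mono_AE[OF Psi_integrable(1)[OF H R al] set_integrable_mult_right[OF ie]])
          show "AE x \<in> {0..R} in lborel. x * Psi \<alpha> 1 ((u x)^2) \<le> (1 + \<alpha> * N) * (x * ((u x)^2)^2 / (1 + \<alpha> * (u x)^2)^2)"
            using AE
          proof eventually_elim
            case (elim x)
            show ?case
            proof
              assume x: "x \<in> {0..R}"
              have "x * Psi \<alpha> 1 ((u x)^2) \<le> x * ((1 + \<alpha> * N) * (((u x)^2)^2 / (1 + \<alpha> * (u x)^2)^2))"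
                using x elim Psi1_bounds(2)[OF al zero_le_power2] by (intro mult_left_mono) auto
              then show "x * Psi \<alpha> 1 ((u x)^2) \<le> (1 + \<alpha> * N) * (x * ((u x)^2)^2 / (1 + \<alpha> * (u x)^2)^2)"
                by (simp add: mult_ac)
            qed
          qed
        qed
        also have "\<dots> = (1 + \<alpha> * N) * E" unfolding E_def by (rule set_integral_mult_right)
        finally show ?thesis .
      qed
      have LN: "L \<le> R^2 * N" using LW NPW P0 R2 by (smt (verit) mult_left_mono)
      have EC: "E \<ge> C" unfolding C_def
        by (rule final_arith[OF th Np R al _ A1L LN A1E]) (use QN QA in simp)
      have der: "((\<lambda>t. gamma R n \<alpha> \<kappa> (Hscale (1 + t) p)) has_real_derivative (Q - A')) (at 0)"
        unfolding p Q_def A'_def by (rule gamma_deriv[OF H R al])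
      show ?thesis
      proof (intro exI conjI)
        show "((\<lambda>t. gamma R n \<alpha> \<kappa> (Hscale (1 + t) p)) has_real_derivative (Q - A')) (at 0)" by (rule der)
        show "Q - A' < - C" unfolding D0 using EC Cp by linarith
      qed
    qed
  qed
qed

end
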